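(* Assume the extended Krylov setup of the context. Let $m=\bar m_k\ge1$, $Y_k\in\mathbb{R}^{2qm\times2qm}$ symmetric, $X_k=V_mY_kV_m^T$, let $m'=\bar m_{k+1}\ge m$, $\widehat Y_k=\mathrm{diag}(Y_k,O_{2q(m'-m)})$, $Q_{m'}=T_{m'}-\widehat Y_kB_{m'}B_{m'}^T$, and let $\widetilde Y$ solve $Q_{m'}\widetilde Y+\widetilde YQ_{m'}^T=-\widehat Y_kB_{m'}B_{m'}^T\widehat Y_k-E_1\gamma\gamma^TE_1^T$. Put $\widetilde X_{k+1}=V_{m'}\widetilde YV_{m'}^T$, $Z_k=\widetilde X_{k+1}-X_k$, and $L_{k+1}=(A-X_kBB^T)\widetilde X_{k+1}+\widetilde X_{k+1}(A-X_kBB^T)^T+X_kBB^TX_k+C^TC$. Define $\alpha_k=\|\mathcal R(X_k)\|_F^2$, $\beta_k=\|L_{k+1}\|_F^2$, $\gamma_k=\langle\mathcal R(X_k),L_{k+1}\rangle_F$, $\delta_k=\|Z_kBB^TZ_k\|_F^2$, $\epsilon_k=\langle\mathcal R(X_k),Z_kBB^TZ_k\rangle_F$, $\zeta_k=\langle L_{k+1},Z_kBB^TZ_k\rangle_F$. Let $D=\widetilde Y-\widehat Y_k$, $W=DB_{m'}B_{m'}^TD$, $R_k=T_mY_k+Y_kT_m^T-Y_kB_mB_m^TY_k+E_1\gamma\gamma^TE_1^T$ (with $E_1\in\mathbb{R}^{2qm\times2q}$), and $N_k=E_{m+1}E_{m+1}^T\underline T_m[Y_k,O_{2qm\times2q}]+[Y_k;O_{2q\times2qm}]\underline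 T_m^TE_{m+1}E_{m+1}^T\in\mathbb{R}^{2q(m+1)\times2q(m+1)}$; for $r\le 2qm'$ let $W_{[r]}$ denote the leading principal $r\times r$ submatrix of $W$. Then $$\alpha_k=\|R_k\|_F^2+2\|Y_k\underline T_m^TE_{m+1}\|_F^2,\qquad \beta_k=2\|\widetilde Y\underline T_{m'}^TE_{m'+1}\|_F^2,\qquad \delta_k=\|W\|_F^2,\qquad \zeta_k=0,$$ $$\gamma_k=\begin{cases}2\langle E_{m+1}^T\underline T_mY_k,\;E_{m'+1}^T\underline T_{m'}\widetilde Y\rangle_F,& m'=m,\\ 0,& m'>m,\end{cases}\qquad \epsilon_k=\begin{cases}\langle R_k,W\rangle_F,& m'=m,\\ \langle R_k,W_{[2qm]}\rangle_F+\langle N_k,W_{[2q(m+1)]}\rangle_F,& m'>m.\end{cases}$$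
   Context: Riccati operator: $\mathcal R(X)=AX+XA^T-XBB^TX+C^TC$. $\langle X,Y\rangle_F=\mathrm{trace}(Y^TX)$. Extended Krylov setup: $A\in\mathbb{R}^{n\times n}$ nonsingular, $B\in\mathbb{R}^{n\times p}$, $C\in\mathbb{R}^{q\times n}$. For nonsingular $M$ and $G\in\mathbb{R}^{n\times s}$, $\mathbf{EK}^\square_m(M,G)=\mathrm{Range}([G,M^{-1}G,MG,M^{-2}G,\dots,M^{m-1}G,M^{-m}G])$. For $m=1,2,\dots$, $V_m\in\mathbb{R}^{n\times 2qm}$ has orthonormal columns spanning $\mathbf{EK}^\square_m(A,C^T)$ (assumed of full dimension $2qm$), the bases are nested: $V_{m+1}=[V_m,\mathcal V_{m+1}]$ with $\mathcal V_{m+1}\in\mathbb{R}^{n\times 2q}$, and $C^T=V_1\gamma$ with $\gamma\in\mathbb{R}^{2q\times q}$. Set $T_m=V_m^TAV_m$, $\underline T_m=V_{m+1}^TAV_m\in\mathbb{R}^{2q(m+1)\times 2qm}$, $B_m=V_m^TB$. $E_1$ denotes the first $2q$ columns of the identity of the appropriate order, and $E_{m+1}\in\mathbb{R}^{2q(m+1)\times 2q}$ the last $2q$ columns of $I_{2q(m+1)}$. $O_r$ / $O_{r\times s}$ are zero matrices; $[M,N]$ and $[M;N]$ denote horizontal and vertical concatenation. *)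

theory Defs
  imports "Jordan_Normal_Form.Matrix"
begin

definition mtrace :: "real mat \<Rightarrow> real" where
  "mtrace M = (\<Sum>i<dim_row M. M $$ (i,i))"

definition frob_inner :: "real mat \<Rightarrow> real mat \<Rightarrow> real" where
  "frob_inner X Y = mtrace (transpose_mat Y * X)"

definition frob_norm :: "real mat \<Rightarrow> real" where
  "frob_norm X = sqrt (frob_inner X X)"

definition col_space :: "real mat \<Rightarrow> real vec set" where
  "col_space M = {M *\<^sub>v x | x. x \<in> carrier_vec (dim_col M)}"

(* generating matrix [G, M^{-1}G, M G, M^{-2}G, ..., M^{m-1}G, M^{-m}G];
   Minv is the inverse of M; block b = 2i is M^i G, block b = 2i+1 is M^{-(i+1)} G *)
definition ek_gen :: "real mat \<Rightarrow> real mat \<Rightarrow> real mat \<Rightarrow> nat \<Rightarrow> real mat" where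
  "ek_gen M Minv G m = mat (dim_row G) (2 * dim_col G * m)
     (\<lambda>(i,j). let s = dim_col G; b = j div s; c = j mod s in
        if even b then (M ^\<^sub>m (b div 2) * G) $$ (i,c)
        else (Minv ^\<^sub>m (b div 2 + 1) * G) $$ (i,c))"

definition EK :: "real mat \<Rightarrow> real mat \<Rightarrow> real mat \<Rightarrow> nat \<Rightarrow> real vec set" where
  "EK M Minv G m = col_space (ek_gen M Minv G m)"

definition riccati :: "real mat \<Rightarrow> real mat \<Rightarrow> real mat \<Rightarrow> real mat \<Rightarrow> real mat" where
  "riccati A B C X = A * X + X * transpose_mat A - X * B * transpose_mat B * X
      + transpose_mat C * C"

definition Efirst :: "nat \<Rightarrow> nat \<Rightarrow> real mat" where
  "Efirst k s = mat k s (\<lambda>(i,j). if i = j then 1 else 0)"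

definition Elast :: "nat \<Rightarrow> nat \<Rightarrow> real mat" where
  "Elast k s = mat k s (\<lambda>(i,j). if i = k - s + j then 1 else 0)"

definition pad_diag :: "real mat \<Rightarrow> nat \<Rightarrow> real mat" where
  "pad_diag Y r = mat r r (\<lambda>(i,j). if i < dim_row Y \<and> j < dim_col Y then Y $$ (i,j) else 0)"

definition pad_right :: "real mat \<Rightarrow> nat \<Rightarrow> real mat" where
  "pad_right Y s = mat (dim_row Y) (dim_col Y + s) (\<lambda>(i,j). if j < dim_col Y then Y $$ (i,j) else 0)"

definition pad_below :: "real mat \<Rightarrow> nat \<Rightarrow> real mat" where
  "pad_below Y s = mat (dim_row Y + s) (dim_col Y) (\<lambda>(i,j). if i < dim_row Y then Y $$ (i,j) else 0)"

definition lead_sub :: "real mat \<Rightarrow> nat \<Rightarrow> real mat" where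
  "lead_sub W r = mat r r (\<lambda>(i,j). W $$ (i,j))"

end

theory Submission
  imports Defs
begin



lemma frob_inner_sum:
  assumes "dim_row X = r" "dim_col X = c" "dim_row Y = r" "dim_col Y = c"
  shows "frob_inner X Y = (\<Sum>i<r. \<Sum>j<c. X$$(i,j) * Y$$(i,j))"
proof -
  have "frob_inner X Y = (\<Sum>j<c. \<Sum>i<r. Y$$(i,j) * X$$(i,j))"
    unfolding frob_inner_def mtrace_def using assms
    by (simp add: scalar_prod_def atLeast0LessThan)
  also have "\<dots> = (\<Sum>i<r. \<Sum>j<c. X$$(i,j) * Y$$(i,j))"
    by (subst sum.swap) (simp add: mult.commute)
  finally show ?thesis .
qed

lemma fi_mult_left:
  assumes "dim_col U = dim_row X" "dim_row Y = dim_row U" "dim_col Y = dim_col X"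
  shows "frob_inner (U * X) Y = frob_inner X (transpose_mat U * Y)"
proof -
  let ?r = "dim_row U" and ?k = "dim_row X" and ?c = "dim_col X"
  have "frob_inner (U * X) Y = (\<Sum>i<?r. \<Sum>j<?c. (\<Sum>l<?k. U$$(i,l) * X$$(l,j)) * Y$$(i,j))"
    using assms by (subst frob_inner_sum[of _ ?r ?c]) (auto simp: scalar_prod_def atLeast0LessThan)
  also have "\<dots> = (\<Sum>l<?k. \<Sum>j<?c. X$$(l,j) * (\<Sum>i<?r. U$$(i,l) * Y$$(i,j)))"
  proof -
    have "(\<Sum>i<?r. \<Sum>j<?c. (\<Sum>l<?k. U$$(i,l) * X$$(l,j)) * Y$$(i,j))
        = (\<Sum>i<?r. \<Sum>j<?c. \<Sum>l<?k. U$$(i,l) * X$$(l,j) * Y$$(i,j))"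
      by (simp add: sum_distrib_right)
    also have "\<dots> = (\<Sum>i<?r. \<Sum>l<?k. \<Sum>j<?c. U$$(i,l) * X$$(l,j) * Y$$(i,j))"
      by (rule sum.cong[OF refl], rule sum.swap)
    also have "\<dots> = (\<Sum>l<?k. \<Sum>i<?r. \<Sum>j<?c. U$$(i,l) * X$$(l,j) * Y$$(i,j))"
      by (rule sum.swap)
    also have "\<dots> = (\<Sum>l<?k. \<Sum>j<?c. \<Sum>i<?r. U$$(i,l) * X$$(l,j) * Y$$(i,j))"
      by (rule sum.cong[OF refl], rule sum.swap)
    also have "\<dots> = (\<Sum>l<?k. \<Sum>j<?c. X$$(l,j) * (\<Sum>i<?r. U$$(i,l) * Y$$(i,j)))"
      by (simp add: sum_distrib_left algebra_simps)
    finally show ?thesis .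
  qed
  also have "\<dots> = frob_inner X (transpose_mat U * Y)"
    using assms by (subst frob_inner_sum[of _ ?k ?c]) (auto simp: scalar_prod_def atLeast0LessThan)
  finally show ?thesis .
qed

lemma fi_sym: "frob_inner X Y = frob_inner Y X" if "dim_row X = dim_row Y" "dim_col X = dim_col Y"
  using that by (simp add: frob_inner_sum[of X "dim_row X" "dim_col X" Y]
     frob_inner_sum[of Y "dim_row X" "dim_col X" X] mult.commute)

lemma fi_transpose: "frob_inner (transpose_mat X) (transpose_mat Y) = frob_inner X Y"
  if "dim_row X = dim_row Y" "dim_col X = dim_col Y"
  using that
  apply (simp add: frob_inner_sum[of X "dim_row X" "dim_col X" Y]
     frob_inner_sum[of "transpose_mat X" "dim_col X" "dim_row X" "transpose_mat Y"])
  by (subst sum.swap) simp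

lemma fi_mult_right:
  assumes "dim_col X = dim_row U" "dim_row Y = dim_row X" "dim_col Y = dim_col U"
  shows "frob_inner (X * U) Y = frob_inner X (Y * transpose_mat U)"
proof -
  have "frob_inner (X * U) Y = frob_inner (transpose_mat (X * U)) (transpose_mat Y)"
    using assms by (simp add: fi_transpose)
  also have "transpose_mat (X * U) = transpose_mat U * transpose_mat X"
    using assms by (intro transpose_mult) auto
  also have "frob_inner (transpose_mat U * transpose_mat X) (transpose_mat Y)
     = frob_inner (transpose_mat X) (U * transpose_mat Y)"
    using assms by (subst fi_mult_left) auto
  also have "U * transpose_mat Y = transpose_mat (Y * transpose_mat U)"
    using assms by (subst transpose_mult) auto
  also have "frob_inner (transpose_mat X) (transpose_mat (Y * transpose_mat U)) = frob_inner X (Y * transpose_mat U)"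
    using assms by (simp add: fi_transpose)
  finally show ?thesis .
qed

lemma fi_add_left: "frob_inner (X + Z) Y = frob_inner X Y + frob_inner Z Y"
  if "dim_row X = dim_row Y" "dim_col X = dim_col Y" "dim_row Z = dim_row Y" "dim_col Z = dim_col Y"
  using that by (simp add: frob_inner_sum[of _ "dim_row Y" "dim_col Y" Y] algebra_simps sum.distrib)

lemma fi_minus_left: "frob_inner (X - Z) Y = frob_inner X Y - frob_inner Z Y"
  if "dim_row X = dim_row Y" "dim_col X = dim_col Y" "dim_row Z = dim_row Y" "dim_col Z = dim_col Y"
  using that by (simp add: frob_inner_sum[of _ "dim_row Y" "dim_col Y" Y] algebra_simps sum_subtractf)

lemma fi_add_right: "frob_inner Y (X + Z) = frob_inner Y X + frob_inner Y Z"
  if "dim_row X = dim_row Y" "dim_col X = dim_col Y" "dim_row Z = dim_row Y" "dim_col Z = dim_col Y"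
  using that by (simp add: frob_inner_sum[of Y "dim_row Y" "dim_col Y"] algebra_simps sum.distrib)

lemma fi_minus_right: "frob_inner Y (X - Z) = frob_inner Y X - frob_inner Y Z"
  if "dim_row X = dim_row Y" "dim_col X = dim_col Y" "dim_row Z = dim_row Y" "dim_col Z = dim_col Y"
  using that by (simp add: frob_inner_sum[of Y "dim_row Y" "dim_col Y"] algebra_simps sum_subtractf)

lemma fi_nonneg: "frob_inner X X \<ge> 0"
  by (simp add: frob_inner_sum[of X "dim_row X" "dim_col X" X] sum_nonneg)

lemma frob_norm_sq: "(frob_norm X)\<^sup>2 = frob_inner X X"
  unfolding frob_norm_def using fi_nonneg by simp

lemma fi_zero_left: "frob_inner (0\<^sub>m r c) Y = 0" if "dim_row Y = r" "dim_col Y = c"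
  using that by (simp add: frob_inner_sum[of _ r c Y])




lemma mult_assoc_d: "dim_col A = dim_row B \<Longrightarrow> dim_col B = dim_row C \<Longrightarrow> A * B * (C::real mat) = A * (B * C)"
  by (rule assoc_mult_mat[of A "dim_row A" "dim_col A" B "dim_col B" C "dim_col C"]) auto

lemma add_mult_d: "dim_row A = dim_row B \<Longrightarrow> dim_col A = dim_col B \<Longrightarrow> dim_col B = dim_row C \<Longrightarrow>
   (A + B) * (C::real mat) = A * C + B * C"
  by (rule add_mult_distrib_mat[of A "dim_row A" "dim_col A"]) auto

lemma mult_add_d: "dim_row B = dim_row C \<Longrightarrow> dim_col B = dim_col C \<Longrightarrow> dim_col A = dim_row B \<Longrightarrow>
   (A::real mat) * (B + C) = A * B + A * C"
  by (rule mult_add_distrib_mat[of A "dim_row A" "dim_col A"]) auto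

lemma minus_mult_d: "dim_row A = dim_row B \<Longrightarrow> dim_col A = dim_col B \<Longrightarrow> dim_col B = dim_row C \<Longrightarrow>
   (A - B) * (C::real mat) = A * C - B * C"
  by (rule minus_mult_distrib_mat[of A "dim_row A" "dim_col A"]) auto

lemma mult_minus_d: "dim_row B = dim_row C \<Longrightarrow> dim_col B = dim_col C \<Longrightarrow> dim_col A = dim_row B \<Longrightarrow>
   (A::real mat) * (B - C) = A * B - A * C"
  by (rule mult_minus_distrib_mat[of A "dim_row A" "dim_col A"]) auto

lemma transpose_mult_d: "dim_col A = dim_row B \<Longrightarrow> transpose_mat (A * B) = transpose_mat B * transpose_mat (A::real mat)"
  by (rule transpose_mult[of A "dim_row A" "dim_col A"]) auto

lemma transpose_add_d: "dim_row A = dim_row B \<Longrightarrow> dim_col A = dim_col B \<Longrightarrow>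
    transpose_mat (A + B) = transpose_mat A + transpose_mat (B::real mat)"
  by (rule transpose_add[of A "dim_row A" "dim_col A"]) auto

lemma transpose_minus_d: "dim_row A = dim_row B \<Longrightarrow> dim_col A = dim_col B \<Longrightarrow>
    transpose_mat (A - B) = transpose_mat A - transpose_mat (B::real mat)"
  by (rule transpose_minus[of A "dim_row A" "dim_col A"]) auto

lemma Efirst_dims[simp]: "dim_row (Efirst k s) = k" "dim_col (Efirst k s) = s"
  "Efirst k s \<in> carrier_mat k s"
  by (auto simp: Efirst_def)

lemma Elast_dims[simp]: "dim_row (Elast k s) = k" "dim_col (Elast k s) = s"
  "Elast k s \<in> carrier_mat k s"
  by (auto simp: Elast_def)

lemma if_mult_01[simp]: "(if P then (1::real) else 0) * y = (if P then y else 0)"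
   "y * (if P then (1::real) else 0) = (if P then y else 0)"
  by auto

lemma Efirst_TT: "r \<le> K \<Longrightarrow> transpose_mat (Efirst K r) * Efirst K r = 1\<^sub>m r"
  apply (rule eq_matI)
  by (auto simp: Efirst_def scalar_prod_def atLeast0LessThan sum.delta)

lemma sum_shift_delta: "(\<Sum>l<(s::nat). if (i::nat) = c + l then f l else (0::real)) = (if c \<le> i \<and> i < c + s then f (i - c) else 0)"
proof -
  have "(\<Sum>l<s. if i = c + l then f l else (0::real)) = (\<Sum>l<s. if l = i - c then (if c \<le> i then f l else 0) else 0)"
    by (rule sum.cong) auto
  also have "\<dots> = (if c \<le> i \<and> i < c + s then f (i - c) else 0)"
    by (subst sum.delta) auto
  finally show ?thesis .
qed

lemma Elast_TT: "s \<le> K \<Longrightarrow> transpose_mat (Elast K s) * Elast K s = 1\<^sub>m s"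
  by (rule eq_matI) (auto simp: Elast_def scalar_prod_def atLeast0LessThan sum.delta)

lemma EfEl_zero: "r + s \<le> K \<Longrightarrow> transpose_mat (Efirst K r) * Elast K s = 0\<^sub>m r s"
  by (rule eq_matI) (auto simp: Elast_def Efirst_def scalar_prod_def atLeast0LessThan sum.delta)

lemma ElEf_zero: "r + s \<le> K \<Longrightarrow> transpose_mat (Elast K s) * Efirst K r = 0\<^sub>m s r"
  by (rule eq_matI) (auto simp: Elast_def Efirst_def scalar_prod_def atLeast0LessThan sum.delta)

lemma Efirst_full: "Efirst K K = 1\<^sub>m K"
  by (rule eq_matI) (auto simp: Efirst_def)

lemma Efirst_comp: "r \<le> k \<Longrightarrow> k \<le> K \<Longrightarrow> Efirst K k * Efirst k r = Efirst K r"
  by (rule eq_matI) (auto simp: Efirst_def scalar_prod_def atLeast0LessThan sum.delta)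

lemma EfEl_split: "r + s = K \<Longrightarrow>
   Efirst K r * transpose_mat (Efirst K r) + Elast K s * transpose_mat (Elast K s) = 1\<^sub>m K"
  by (rule eq_matI) (auto simp: Elast_def Efirst_def scalar_prod_def atLeast0LessThan sum.delta sum_shift_delta)

lemma pad_diag_E: "Y \<in> carrier_mat a a \<Longrightarrow> a \<le> b \<Longrightarrow>
   pad_diag Y b = Efirst b a * Y * transpose_mat (Efirst b a)"
  by (rule eq_matI) (auto simp: pad_diag_def Efirst_def scalar_prod_def atLeast0LessThan sum.delta)

lemma pad_right_E: "dim_col Y = a \<Longrightarrow> pad_right Y s = Y * transpose_mat (Efirst (a + s) a)"
  by (rule eq_matI) (auto simp: pad_right_def Efirst_def scalar_prod_def atLeast0LessThan sum.delta)

lemma pad_below_E: "dim_row Y = a \<Longrightarrow> pad_below Y s = Efirst (a + s) a * Y"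
  by (rule eq_matI) (auto simp: pad_below_def Efirst_def scalar_prod_def atLeast0LessThan sum.delta)

lemma lead_sub_E: "W \<in> carrier_mat b b \<Longrightarrow> r \<le> b \<Longrightarrow>
   lead_sub W r = transpose_mat (Efirst b r) * W * Efirst b r"
  by (rule eq_matI) (auto simp: lead_sub_def Efirst_def scalar_prod_def atLeast0LessThan sum.delta)




lemma pow_left_Suc: "A \<in> carrier_mat n n \<Longrightarrow> A * (A ^\<^sub>m k) = A ^\<^sub>m (Suc k)"
proof (induction k)
  case 0 then show ?case by simp
next
  case (Suc k)
  have "A * A ^\<^sub>m Suc k = A * (A ^\<^sub>m k * A)" by simp
  also have "\<dots> = (A * A ^\<^sub>m k) * A" using Suc.prems
    by (intro assoc_mult_mat[symmetric]) auto
  also have "\<dots> = A ^\<^sub>m Suc (Suc k)" using Suc by simp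
  finally show ?case .
qed

lemma pow_inv_Suc: "A \<in> carrier_mat n n \<Longrightarrow> Ainv \<in> carrier_mat n n \<Longrightarrow> A * Ainv = 1\<^sub>m n \<Longrightarrow>
   A * (Ainv ^\<^sub>m (Suc k)) = Ainv ^\<^sub>m k"
proof (induction k)
  case 0 then show ?case by simp
next
  case (Suc k)
  have "A * Ainv ^\<^sub>m Suc (Suc k) = A * (Ainv ^\<^sub>m Suc k * Ainv)" by simp
  also have "\<dots> = (A * Ainv ^\<^sub>m Suc k) * Ainv" using Suc.prems
    by (intro assoc_mult_mat[symmetric]) auto
  also have "\<dots> = Ainv ^\<^sub>m Suc k" using Suc by simp
  finally show ?case .
qed

lemma divmod_aux: "c < (q::nat) \<Longrightarrow> (x * q + c) div q = x" "c < (q::nat) \<Longrightarrow> (x * q + c) mod q = c"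
  by auto

lemma ek_dims[simp]: "dim_row (ek_gen M Minv G m) = dim_row G" "dim_col (ek_gen M Minv G m) = 2 * dim_col G * m"
  by (auto simp: ek_gen_def)

definition tau :: "nat \<Rightarrow> nat \<Rightarrow> nat" where
  "tau q jj = (let b = jj div q; c = jj mod q in
     if even b then (b + 2) * q + c else if b = 1 then c else (b - 2) * q + c)"

lemma ek_shift:
  assumes A: "A \<in> carrier_mat n n" and Ai: "Ainv \<in> carrier_mat n n" "A * Ainv = 1\<^sub>m n"
    and G: "G \<in> carrier_mat n q"
  shows "A * ek_gen A Ainv G j = ek_gen A Ainv G (Suc j) *
     mat (2 * q * Suc j) (2 * q * j) (\<lambda>(r,c). if r = tau q c then 1 else 0)"
proof (rule eq_matI)
  fix i jj assume i: "i < dim_row (ek_gen A Ainv G (Suc j) *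
     mat (2 * q * Suc j) (2 * q * j) (\<lambda>(r,c). if r = tau q c then 1 else 0))"
    and jj: "jj < dim_col (ek_gen A Ainv G (Suc j) *
     mat (2 * q * Suc j) (2 * q * j) (\<lambda>(r,c). if r = tau q c then 1 else 0))"
  from i G have i: "i < n" by simp
  from jj G have jj: "jj < 2 * q * j" by simp
  then have qpos: "q > 0" by (cases q) auto
  define b where "b = jj div q"
  define c where "c = jj mod q"
  have c: "c < q" using qpos c_def by simp
  have jjbc: "jj = b * q + c" unfolding b_def c_def by simp
  have b: "b < 2 * j" using jj jjbc qpos
    by (metis b_def less_mult_imp_div_less mult.assoc mult.commute)
  have tau_lt: "tau q jj < 2 * q * Suc j"
  proof -
    have "tau q jj = (if even b then (b + 2) * q + c else if b = 1 then c else (b - 2) * q + c)"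
      unfolding tau_def Let_def b_def c_def by simp
    moreover have "(b + 2) * q + c < 2 * q * Suc j" if "even b"
    proof -
      from that b have "b + 2 \<le> 2 * j" by (auto elim!: evenE)
      then have "(b + 2) * q \<le> 2 * j * q" by (rule mult_le_mono1)
      then have "(b + 2) * q + c < 2 * j * q + q" using c by linarith
      also have "\<dots> \<le> 2 * q * Suc j" by simp
      finally show ?thesis .
    qed
    moreover have "(b - 2) * q + c < 2 * q * Suc j" if "b \<ge> 2"
    proof -
      have e: "b - 1 = Suc (b - 2)" using that by simp
      have "(b - 1) * q = (b - 2) * q + q" unfolding e by simp
      then have "(b - 2) * q + c < (b - 1) * q" using c by linarith
      also have "\<dots> \<le> 2 * j * q" using b by (intro mult_le_mono1) linarith
      also have "\<dots> \<le> 2 * q * Suc j" by simp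
      finally show ?thesis .
    qed
    moreover have "odd b \<Longrightarrow> b \<noteq> 1 \<Longrightarrow> b \<ge> 2" by presburger
    moreover have "c < 2 * q * Suc j" using c by simp
    ultimately show ?thesis by (simp split: if_split)
  qed
  have lhs: "(A * ek_gen A Ainv G j) $$ (i, jj) =
      (if even b then (A ^\<^sub>m (b div 2 + 1) * G) $$ (i,c) else (Ainv ^\<^sub>m (b div 2) * G) $$ (i,c))"
  proof -
    have colE: "col (ek_gen A Ainv G j) jj = (if even b then col (A ^\<^sub>m (b div 2) * G) c
        else col (Ainv ^\<^sub>m (b div 2 + 1) * G) c)"
      using G jj c A Ai unfolding b_def c_def
      by (intro eq_vecI) (auto simp: ek_gen_def col_def Let_def)
    have "(A * ek_gen A Ainv G j) $$ (i, jj) = row A i \<bullet> col (ek_gen A Ainv G j) jj"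
      using A G i jj by simp
    also have "\<dots> = (if even b then (A * (A ^\<^sub>m (b div 2) * G)) $$ (i,c)
        else (A * (Ainv ^\<^sub>m (b div 2 + 1) * G)) $$ (i,c))"
      using colE A G i c by simp
    also have "\<dots> = (if even b then (A ^\<^sub>m (b div 2 + 1) * G) $$ (i,c) else (Ainv ^\<^sub>m (b div 2) * G) $$ (i,c))"
    proof -
      have "A * (A ^\<^sub>m (b div 2) * G) = (A * A ^\<^sub>m (b div 2)) * G"
        using A G by (intro assoc_mult_mat[symmetric]) auto
      moreover have "A * (Ainv ^\<^sub>m (b div 2 + 1) * G) = (A * Ainv ^\<^sub>m (b div 2 + 1)) * G"
        using A Ai G by (intro assoc_mult_mat[symmetric]) auto
      ultimately show ?thesis using pow_left_Suc[OF A] pow_inv_Suc[OF A Ai] by simp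
    qed
    finally show ?thesis .
  qed
  have rhs: "(ek_gen A Ainv G (Suc j) * mat (2 * q * Suc j) (2 * q * j) (\<lambda>(r,c). if r = tau q c then 1 else 0)) $$ (i, jj)
     = ek_gen A Ainv G (Suc j) $$ (i, tau q jj)"
    using G i jj tau_lt by (simp add: scalar_prod_def atLeast0LessThan sum.delta)
  have rhs2: "ek_gen A Ainv G (Suc j) $$ (i, tau q jj) =
      (if even b then (A ^\<^sub>m (b div 2 + 1) * G) $$ (i,c) else (Ainv ^\<^sub>m (b div 2) * G) $$ (i,c))"
  proof -
    have e: "ek_gen A Ainv G (Suc j) $$ (i, tau q jj) =
      (let bb = tau q jj div q; cc = tau q jj mod q in
        if even bb then (A ^\<^sub>m (bb div 2) * G) $$ (i,cc)
        else (Ainv ^\<^sub>m (bb div 2 + 1) * G) $$ (i,cc))"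
      using G i tau_lt by (simp add: ek_gen_def)
    have t: "tau q jj = (if even b then (b + 2) * q + c else if b = 1 then c else (b - 2) * q + c)"
      unfolding tau_def Let_def b_def c_def by simp
    show ?thesis
    proof (cases "even b")
      case True
      have d: "tau q jj div q = b + 2" "tau q jj mod q = c" using t True divmod_aux[OF c, of "b+2"] by auto
      have "even (b + 2)" "(b + 2) div 2 = b div 2 + 1" using True by auto
      then show ?thesis using e d True by (simp add: Let_def)
    next
      case False
      show ?thesis
      proof (cases "b = 1")
        case True
        have d: "tau q jj div q = 0" "tau q jj mod q = c" using t True c by auto
        then show ?thesis using e True A Ai by (simp add: Let_def)
      next
        case b1: False
        with False have "b \<ge> 3" by presburger
        then have o: "odd (b - 2)" "(b - 2) div 2 + 1 = b div 2" using False by presburger+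
        have d: "tau q jj div q = b - 2" "tau q jj mod q = c" using t False b1 divmod_aux[OF c, of "b-2"] by auto
        show ?thesis using e d o False by (simp add: Let_def)
      qed
    qed
  qed
  show "(A * ek_gen A Ainv G j) $$ (i, jj) = (ek_gen A Ainv G (Suc j) *
     mat (2 * q * Suc j) (2 * q * j) (\<lambda>(r,c). if r = tau q c then 1 else 0)) $$ (i, jj)"
    using lhs rhs rhs2 by simp
next
  show "dim_row (A * ek_gen A Ainv G j) = dim_row (ek_gen A Ainv G (Suc j) *
     mat (2 * q * Suc j) (2 * q * j) (\<lambda>(r,c). if r = tau q c then 1 else 0))" using A G by simp
  show "dim_col (A * ek_gen A Ainv G j) = dim_col (ek_gen A Ainv G (Suc j) *
     mat (2 * q * Suc j) (2 * q * j) (\<lambda>(r,c). if r = tau q c then 1 else 0))" using A G by simp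
qed




lemma col_unit: "(M::real mat) \<in> carrier_mat r c \<Longrightarrow> i < c \<Longrightarrow> M *\<^sub>v unit_vec c i = col M i"
  by (rule eq_vecI) (auto simp: scalar_prod_def unit_vec_def atLeast0LessThan sum.delta)

lemma proj_cols:
  assumes U: "(U::real mat) \<in> carrier_mat n k" "transpose_mat U * U = 1\<^sub>m k" and M: "M \<in> carrier_mat n c"
    and cols: "\<And>i. i < c \<Longrightarrow> \<exists>y \<in> carrier_vec k. col M i = U *\<^sub>v y"
  shows "U * (transpose_mat U * M) = M"
proof (rule mat_col_eqI)
  fix i assume "i < dim_col M"
  then have i: "i < c" using M by simp
  obtain y where y: "y \<in> carrier_vec k" "col M i = U *\<^sub>v y" using cols[OF i] by blast
  have "col (U * (transpose_mat U * M)) i = U *\<^sub>v (transpose_mat U *\<^sub>v col M i)"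
    using U M i by (simp add: col_mult2[of _ n k _ c] col_mult2[of _ k n _ c] del: col_mult)
  also have "transpose_mat U *\<^sub>v col M i = (transpose_mat U * U) *\<^sub>v y"
    using y U by (subst assoc_mult_mat_vec[of _ k n _ k]) auto
  also have "\<dots> = y" using U y by simp
  finally show "col (U * (transpose_mat U * M)) i = col M i" using y by simp
qed (insert U M, auto)

lemma col_space_mem: "(M::real mat) \<in> carrier_mat r c \<Longrightarrow> i < c \<Longrightarrow> col M i \<in> col_space M"
  unfolding col_space_def using col_unit[of M r c i, symmetric] by fastforce

lemma AV_range:
  assumes A: "A \<in> carrier_mat n n" and Ai: "Ainv \<in> carrier_mat n n" "A * Ainv = 1\<^sub>m n"
    and C: "C \<in> carrier_mat q n"
    and Vj: "Vj \<in> carrier_mat n (2 * q * j)" "col_space Vj = EK A Ainv (transpose_mat C) j"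
    and U: "U \<in> carrier_mat n (2 * q * Suc j)" "transpose_mat U * U = 1\<^sub>m (2 * q * Suc j)"
      "col_space U = EK A Ainv (transpose_mat C) (Suc j)"
  shows "A * Vj = U * (transpose_mat U * A * Vj)"
proof -
  let ?G = "transpose_mat C"
  have G: "?G \<in> carrier_mat n q" using C by simp
  let ?S = "mat (2 * q * Suc j) (2 * q * j) (\<lambda>(r,c). if r = tau q c then 1 else (0::real))"
  have sh: "A * ek_gen A Ainv ?G j = ek_gen A Ainv ?G (Suc j) * ?S"
    by (rule ek_shift[OF A Ai G])
  have ekc: "ek_gen A Ainv ?G j \<in> carrier_mat n (2 * q * j)" "ek_gen A Ainv ?G (Suc j) \<in> carrier_mat n (2 * q * Suc j)"
    using G by (auto intro!: carrier_matI)
  have "U * (transpose_mat U * (A * Vj)) = A * Vj"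
  proof (rule proj_cols[OF U(1,2)])
    show "A * Vj \<in> carrier_mat n (2 * q * j)" using A Vj by simp
    fix i assume i: "i < 2 * q * j"
    have "col Vj i \<in> EK A Ainv ?G j" using col_space_mem[OF Vj(1) i] Vj(2) by simp
    then obtain x where x: "x \<in> carrier_vec (2 * q * j)" "col Vj i = ek_gen A Ainv ?G j *\<^sub>v x"
      unfolding EK_def col_space_def using G by auto
    have "col (A * Vj) i = A *\<^sub>v col Vj i" using A Vj i by (simp add: col_mult2[of _ n n _ "2*q*j"] del: col_mult)
    also have "\<dots> = (A * ek_gen A Ainv ?G j) *\<^sub>v x" using x A ekc by (simp add: assoc_mult_mat_vec[of _ n n _ "2*q*j"])
    also have "\<dots> = ek_gen A Ainv ?G (Suc j) *\<^sub>v (?S *\<^sub>v x)" unfolding sh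
      using ekc x by (simp add: assoc_mult_mat_vec[of _ n "2 * q * Suc j" _ "2*q*j"])
    finally have e: "col (A * Vj) i = ek_gen A Ainv ?G (Suc j) *\<^sub>v (?S *\<^sub>v x)" .
    have Sx: "?S *\<^sub>v x \<in> carrier_vec (2 * q * Suc j)" by (rule mult_mat_vec_carrier[OF mat_carrier x(1)])
    have "col (A * Vj) i \<in> EK A Ainv ?G (Suc j)" unfolding e EK_def col_space_def using G Sx
      by (intro CollectI exI[of _ "?S *\<^sub>v x"] conjI refl) simp_all
    then have "col (A * Vj) i \<in> col_space U" using U(3) by simp
    then obtain y where "y \<in> carrier_vec (dim_col U)" "col (A * Vj) i = U *\<^sub>v y" unfolding col_space_def by auto
    then show "\<exists>y \<in> carrier_vec (2 * q * Suc j). col (A * Vj) i = U *\<^sub>v y" using U by auto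
  qed
  moreover have "transpose_mat U * A * Vj = transpose_mat U * (A * Vj)" using U A Vj by (intro assoc_mult_mat) auto
  ultimately show ?thesis by simp
qed




lemma iso_lr:
  fixes W W' M N :: "real mat"
  assumes W: "W \<in> carrier_mat r k" "transpose_mat W * W = 1\<^sub>m k"
    and W': "W' \<in> carrier_mat r' k'" "transpose_mat W' * W' = 1\<^sub>m k'"
    and M: "M \<in> carrier_mat k k'" and N: "N \<in> carrier_mat k k'"
  shows "frob_inner (W * M * transpose_mat W') (W * N * transpose_mat W') = frob_inner M N"
proof -
  have "frob_inner (W * M * transpose_mat W') (W * N * transpose_mat W')
      = frob_inner (W * (M * transpose_mat W')) (W * (N * transpose_mat W'))"
    using W W' M N by (simp add: mult_assoc_d)
  also have "\<dots> = frob_inner (M * transpose_mat W') (transpose_mat W * (W * (N * transpose_mat W')))"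
    using W W' M N by (intro fi_mult_left) auto
  also have "transpose_mat W * (W * (N * transpose_mat W')) = (transpose_mat W * W) * (N * transpose_mat W')"
    using W W' M N by (intro mult_assoc_d[symmetric]) auto
  also have "\<dots> = N * transpose_mat W'" using W W' M N by simp
  also have "frob_inner (M * transpose_mat W') (N * transpose_mat W') = frob_inner M (N * transpose_mat W' * transpose_mat (transpose_mat W'))"
    using W W' M N by (intro fi_mult_right) auto
  also have "N * transpose_mat W' * transpose_mat (transpose_mat W') = N * (transpose_mat W' * W')"
    using W W' M N by (simp add: mult_assoc_d)
  also have "\<dots> = N" using W W' M N by simp
  finally show ?thesis .
qed

lemma orth_l:
  fixes W1 W2 V1 V2 M N :: "real mat"
  assumes "W1 \<in> carrier_mat r k1" "W2 \<in> carrier_mat r k2" "V1 \<in> carrier_mat c l1" "V2 \<in> carrier_mat c l2"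
    "M \<in> carrier_mat k1 l1" "N \<in> carrier_mat k2 l2" "transpose_mat W1 * W2 = 0\<^sub>m k1 k2"
  shows "frob_inner (W1 * M * transpose_mat V1) (W2 * N * transpose_mat V2) = 0"
proof -
  have "frob_inner (W1 * M * transpose_mat V1) (W2 * N * transpose_mat V2)
      = frob_inner (W1 * (M * transpose_mat V1)) (W2 * N * transpose_mat V2)"
    using assms by (simp add: mult_assoc_d)
  also have "\<dots> = frob_inner (M * transpose_mat V1) (transpose_mat W1 * (W2 * N * transpose_mat V2))"
    using assms by (intro fi_mult_left) auto
  also have "transpose_mat W1 * (W2 * N * transpose_mat V2) = (transpose_mat W1 * W2) * (N * transpose_mat V2)"
    using assms(1-6) by (simp add: mult_assoc_d)
  also have "\<dots> = 0\<^sub>m k1 k2 * (N * transpose_mat V2)" by (simp only: assms(7))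
  also have "\<dots> = 0\<^sub>m k1 c" using assms by (intro left_mult_zero_mat) auto
  also have "frob_inner (M * transpose_mat V1) (0\<^sub>m k1 c) = 0"
    using assms by (subst fi_sym) (auto intro!: fi_zero_left)
  finally show ?thesis .
qed

lemma orth_r:
  fixes W1 W2 V1 V2 M N :: "real mat"
  assumes "W1 \<in> carrier_mat r k1" "W2 \<in> carrier_mat r k2" "V1 \<in> carrier_mat c l1" "V2 \<in> carrier_mat c l2"
    "M \<in> carrier_mat k1 l1" "N \<in> carrier_mat k2 l2" "transpose_mat V1 * V2 = 0\<^sub>m l1 l2"
  shows "frob_inner (W1 * M * transpose_mat V1) (W2 * N * transpose_mat V2) = 0"
proof -
  have "frob_inner (W1 * M * transpose_mat V1) (W2 * N * transpose_mat V2)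
      = frob_inner (transpose_mat (W1 * M * transpose_mat V1)) (transpose_mat (W2 * N * transpose_mat V2))"
    using assms by (simp add: fi_transpose)
  also have "transpose_mat (W1 * M * transpose_mat V1) = V1 * transpose_mat M * transpose_mat W1"
    using assms by (simp add: transpose_mult_d mult_assoc_d)
  also have "transpose_mat (W2 * N * transpose_mat V2) = V2 * transpose_mat N * transpose_mat W2"
    using assms by (simp add: transpose_mult_d mult_assoc_d)
  also have "frob_inner (V1 * transpose_mat M * transpose_mat W1) (V2 * transpose_mat N * transpose_mat W2) = 0"
    by (rule orth_l[OF assms(3,4,1,2) transpose_carrier_mat[THEN iffD2, OF assms(5)] transpose_carrier_mat[THEN iffD2, OF assms(6)] assms(7)])
  finally show ?thesis .
qed

lemma fi_transpose_self: "frob_inner (transpose_mat X) (transpose_mat X) = frob_inner X X"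
  by (simp add: fi_transpose)

lemma fi_expand3:
  fixes X1 X2 X3 :: "real mat"
  assumes "X1 \<in> carrier_mat r c" "X2 \<in> carrier_mat r c" "X3 \<in> carrier_mat r c"
  shows "frob_inner (X1 + X2 + X3) (X1 + X2 + X3) =
    frob_inner X1 X1 + frob_inner X2 X2 + frob_inner X3 X3 + 2 * frob_inner X1 X2 + 2 * frob_inner X1 X3
    + 2 * frob_inner X2 X3"
  using assms by (simp add: fi_add_left fi_add_right fi_sym[of X2 X1] fi_sym[of X3 X1] fi_sym[of X3 X2])




lemmas dsimps = mult_assoc_d add_mult_d mult_add_d minus_mult_d mult_minus_d transpose_mult_d
   transpose_add_d transpose_minus_d

lemma alpha_struct:
  fixes A B C g Y U Vm V1 Tu e El E1 :: "real mat"
  assumes U: "U \<in> carrier_mat n a'" "transpose_mat U * U = 1\<^sub>m a'"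
    and e: "e \<in> carrier_mat a' a" and El: "El \<in> carrier_mat a' s" and E1: "E1 \<in> carrier_mat a s"
    and Vm: "Vm = U * e" and V1: "V1 = U * (e * E1)"
    and A: "A \<in> carrier_mat n n" and B: "B \<in> carrier_mat n p" and C: "C \<in> carrier_mat q n"
    and g: "g \<in> carrier_mat s q" "transpose_mat C = V1 * g"
    and Y: "Y \<in> carrier_mat a a"
    and AV: "A * Vm = U * Tu" and Tu: "Tu \<in> carrier_mat a' a"
  shows "riccati A B C (Vm * Y * transpose_mat Vm) =
     U * (Tu * Y * transpose_mat e + e * Y * transpose_mat Tu
      - e * Y * (transpose_mat Vm * B) * transpose_mat (transpose_mat Vm * B) * Y * transpose_mat e
      + e * E1 * g * transpose_mat g * transpose_mat E1 * transpose_mat e) * transpose_mat U"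
proof -
  have [simp]: "dim_row U = n" "dim_col U = a'" "dim_row A = n" "dim_col A = n" "dim_row Y = a" "dim_col Y = a"
    "dim_row Tu = a'" "dim_col Tu = a" "dim_row e = a'" "dim_col e = a" "dim_row El = a'" "dim_col El = s"
    "dim_row E1 = a" "dim_col E1 = s" "dim_row B = n" "dim_col B = p" "dim_row g = s" "dim_col g = q"
    "dim_row C = q" "dim_col C = n"
    using U A Y Tu e El E1 B g C by auto
  have AV': "A * (U * (e * Z)) = U * (Tu * Z)" if "dim_row Z = a" for Z
  proof -
    have "A * (U * (e * Z)) = A * (U * e) * Z" using that by (simp add: mult_assoc_d)
    also have "\<dots> = U * (Tu * Z)" using AV unfolding Vm using that by (simp add: mult_assoc_d)
    finally show ?thesis .
  qed
  have AVT: "transpose_mat e * (transpose_mat U * transpose_mat A) = transpose_mat Tu * transpose_mat U"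
  proof -
    have "transpose_mat (A * (U * e)) = transpose_mat (U * Tu)" using AV Vm by simp
    then show ?thesis by (simp add: transpose_mult_d mult_assoc_d)
  qed
  have Ceq: "C = transpose_mat g * (transpose_mat E1 * (transpose_mat e * transpose_mat U))"
  proof -
    have "C = transpose_mat (transpose_mat C)" by simp
    also have "\<dots> = transpose_mat (U * (e * E1) * g)" using g V1 by simp
    finally show ?thesis by (simp add: transpose_mult_d mult_assoc_d)
  qed
  show ?thesis
    unfolding riccati_def Vm
    apply (subst (2) Ceq)
    apply (simp add: dsimps AV' AVT g(2) V1)
    done
qed


lemma rearr:
  fixes P1 P2 w1 w2 z1 z2 H Cc :: "real mat"
  assumes "P1 = w1 + z1" "P2 = w2 + z2"
    "w1 \<in> carrier_mat r c" "w2 \<in> carrier_mat r c" "z1 \<in> carrier_mat r c" "z2 \<in> carrier_mat r c"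
    "H \<in> carrier_mat r c" "Cc \<in> carrier_mat r c"
  shows "((P1 + P2) - H) + Cc = (((w1 + w2) - H) + Cc) + z1 + z2"
  using assms by (intro eq_matI) auto

lemma alpha_rearr:
  fixes A B C g Y U Vm V1 Tu e El E1 :: "real mat"
  assumes U: "U \<in> carrier_mat n a'" "transpose_mat U * U = 1\<^sub>m a'"
    and e: "e \<in> carrier_mat a' a" and El: "El \<in> carrier_mat a' s" and E1: "E1 \<in> carrier_mat a s"
    and split: "e * transpose_mat e + El * transpose_mat El = 1\<^sub>m a'"
    and Vm: "Vm = U * e"
    and A: "A \<in> carrier_mat n n" and B: "B \<in> carrier_mat n p"
    and g: "g \<in> carrier_mat s q"
    and Y: "Y \<in> carrier_mat a a"
    and AV: "A * Vm = U * Tu" and Tu: "Tu \<in> carrier_mat a' a"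
  shows "Tu * Y * transpose_mat e + e * Y * transpose_mat Tu
      - e * Y * (transpose_mat Vm * B) * transpose_mat (transpose_mat Vm * B) * Y * transpose_mat e
      + e * E1 * g * transpose_mat g * transpose_mat E1 * transpose_mat e
   = e * ((transpose_mat Vm * A * Vm) * Y + Y * transpose_mat (transpose_mat Vm * A * Vm)
          - Y * (transpose_mat Vm * B) * transpose_mat (transpose_mat Vm * B) * Y
          + E1 * g * transpose_mat g * transpose_mat E1) * transpose_mat e
     + El * (transpose_mat El * Tu * Y) * transpose_mat e
     + e * (Y * transpose_mat Tu * El) * transpose_mat El"
proof -
  have [simp]: "dim_row U = n" "dim_col U = a'" "dim_row A = n" "dim_col A = n" "dim_row Y = a" "dim_col Y = a"
    "dim_row Tu = a'" "dim_col Tu = a" "dim_row e = a'" "dim_col e = a" "dim_row El = a'" "dim_col El = s"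
    "dim_row E1 = a" "dim_col E1 = s" "dim_row B = n" "dim_col B = p" "dim_row g = s" "dim_col g = q"
    using U A Y Tu e El E1 B g by auto
  have Tm: "transpose_mat Vm * A * Vm = transpose_mat e * Tu"
  proof -
    have "transpose_mat Vm * A * Vm = transpose_mat e * ((transpose_mat U * U) * Tu)"
      unfolding Vm by (simp add: dsimps AV[unfolded Vm])
    then show ?thesis using U by simp
  qed
  have S1: "Tu * (Y * transpose_mat e) = e * (transpose_mat e * (Tu * (Y * transpose_mat e)))
      + El * (transpose_mat El * (Tu * (Y * transpose_mat e)))"
  proof -
    have "Tu * (Y * transpose_mat e) = 1\<^sub>m a' * (Tu * (Y * transpose_mat e))" by simp
    also have "\<dots> = (e * transpose_mat e + El * transpose_mat El) * (Tu * (Y * transpose_mat e))"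
      by (simp only: split)
    finally show ?thesis by (simp add: dsimps)
  qed
  have S2: "e * (Y * transpose_mat Tu) = e * (Y * (transpose_mat Tu * (e * transpose_mat e)))
      + e * (Y * (transpose_mat Tu * (El * transpose_mat El)))"
  proof -
    have "e * (Y * transpose_mat Tu) = (e * (Y * transpose_mat Tu)) * 1\<^sub>m a'" by simp
    also have "\<dots> = (e * (Y * transpose_mat Tu)) * (e * transpose_mat e + El * transpose_mat El)"
      by (simp only: split)
    finally show ?thesis by (simp add: dsimps)
  qed
  show ?thesis
    unfolding Tm apply (simp add: dsimps Vm)
    apply (rule rearr[where r=a' and c=a', OF S1 S2])
    apply (auto intro!: carrier_matI)
    done
qed


lemma alpha_norm:
  fixes U e El R Tu Y :: "real mat"
  assumes U: "U \<in> carrier_mat n a'" "transpose_mat U * U = 1\<^sub>m a'"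
    and e: "e \<in> carrier_mat a' a" "transpose_mat e * e = 1\<^sub>m a"
    and El: "El \<in> carrier_mat a' s" "transpose_mat El * El = 1\<^sub>m s"
    and o1: "transpose_mat e * El = 0\<^sub>m a s" and o2: "transpose_mat El * e = 0\<^sub>m s a"
    and R: "R \<in> carrier_mat a a" and Tu: "Tu \<in> carrier_mat a' a" and Y: "Y \<in> carrier_mat a a" "transpose_mat Y = Y"
  shows "frob_inner (U * (e * R * transpose_mat e + El * (transpose_mat El * Tu * Y) * transpose_mat e
            + e * (Y * transpose_mat Tu * El) * transpose_mat El) * transpose_mat U)
           (U * (e * R * transpose_mat e + El * (transpose_mat El * Tu * Y) * transpose_mat e
            + e * (Y * transpose_mat Tu * El) * transpose_mat El) * transpose_mat U)
    = frob_inner R R + 2 * frob_inner (Y * transpose_mat Tu * El) (Y * transpose_mat Tu * El)"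
proof -
  let ?t = "transpose_mat El * Tu * Y" and ?u = "Y * transpose_mat Tu * El"
  have t: "?t \<in> carrier_mat s a" using El Tu Y by auto
  have u: "?u \<in> carrier_mat a s" using El Tu Y by auto
  have c1: "e * R * transpose_mat e \<in> carrier_mat a' a'" using e R by auto
  have c2: "El * ?t * transpose_mat e \<in> carrier_mat a' a'" using El t e by auto
  have c3: "e * ?u * transpose_mat El \<in> carrier_mat a' a'" using El u e by auto
  have M: "e * R * transpose_mat e + El * ?t * transpose_mat e + e * ?u * transpose_mat El \<in> carrier_mat a' a'"
    using c1 c2 c3 by auto
  have "frob_inner (U * (e * R * transpose_mat e + El * ?t * transpose_mat e + e * ?u * transpose_mat El) * transpose_mat U)
           (U * (e * R * transpose_mat e + El * ?t * transpose_mat e + e * ?u * transpose_mat El) * transpose_mat U)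
     = frob_inner (e * R * transpose_mat e + El * ?t * transpose_mat e + e * ?u * transpose_mat El)
           (e * R * transpose_mat e + El * ?t * transpose_mat e + e * ?u * transpose_mat El)"
    by (rule iso_lr[OF U U M M])
  also have "\<dots> = frob_inner R R + frob_inner ?t ?t + frob_inner ?u ?u"
  proof -
    have d1: "frob_inner (e * R * transpose_mat e) (e * R * transpose_mat e) = frob_inner R R"
      by (rule iso_lr[OF e e R R])
    have d2: "frob_inner (El * ?t * transpose_mat e) (El * ?t * transpose_mat e) = frob_inner ?t ?t"
      by (rule iso_lr[OF El e t t])
    have d3: "frob_inner (e * ?u * transpose_mat El) (e * ?u * transpose_mat El) = frob_inner ?u ?u"
      by (rule iso_lr[OF e El u u])
    have x12: "frob_inner (e * R * transpose_mat e) (El * ?t * transpose_mat e) = 0"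
      by (rule orth_l[OF e(1) El(1) e(1) e(1) R t o1])
    have x13: "frob_inner (e * R * transpose_mat e) (e * ?u * transpose_mat El) = 0"
      by (rule orth_r[OF e(1) e(1) e(1) El(1) R u o1])
    have x23: "frob_inner (El * ?t * transpose_mat e) (e * ?u * transpose_mat El) = 0"
      by (rule orth_l[OF El(1) e(1) e(1) El(1) t u o2])
    show ?thesis using fi_expand3[OF c1 c2 c3] d1 d2 d3 x12 x13 x23 by simp
  qed
  also have "frob_inner ?t ?t = frob_inner ?u ?u"
  proof -
    have "transpose_mat ?t = ?u" using El Tu Y by (simp add: transpose_mult_d mult_assoc_d)
    then show ?thesis using fi_transpose_self[of ?t] by simp
  qed
  finally show ?thesis by simp
qed






lemma L_stepA:
  fixes A B C g Yh Yt P Fb Elp E1 Vmp Tup :: "real mat"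
  assumes P: "P \<in> carrier_mat n K"
    and Fb: "Fb \<in> carrier_mat K b" and E1: "E1 \<in> carrier_mat b s"
    and Vmp: "Vmp = P * Fb"
    and A: "A \<in> carrier_mat n n" and B: "B \<in> carrier_mat n p" and C: "C \<in> carrier_mat q n"
    and g: "g \<in> carrier_mat s q" "transpose_mat C = Vmp * E1 * g"
    and Yh: "Yh \<in> carrier_mat b b" and Yt: "Yt \<in> carrier_mat b b"
    and AV: "A * Vmp = P * Tup" and Tup: "Tup \<in> carrier_mat K b"
  shows "(A - Vmp * Yh * transpose_mat Vmp * B * transpose_mat B) * (Vmp * Yt * transpose_mat Vmp)
      + (Vmp * Yt * transpose_mat Vmp) * transpose_mat (A - Vmp * Yh * transpose_mat Vmp * B * transpose_mat B)
      + Vmp * Yh * transpose_mat Vmp * B * transpose_mat B * (Vmp * Yh * transpose_mat Vmp) + transpose_mat C * C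
    = P * (((Tup * Yt * transpose_mat Fb - Fb * Yh * (transpose_mat Vmp * B) * transpose_mat (transpose_mat Vmp * B) * Yt * transpose_mat Fb)
          + (Fb * Yt * transpose_mat Tup - Fb * Yt * (transpose_mat Vmp * B) * transpose_mat (transpose_mat Vmp * B) * transpose_mat Yh * transpose_mat Fb))
          + Fb * Yh * (transpose_mat Vmp * B) * transpose_mat (transpose_mat Vmp * B) * Yh * transpose_mat Fb
          + Fb * E1 * g * transpose_mat g * transpose_mat E1 * transpose_mat Fb) * transpose_mat P"
proof -
  have [simp]: "dim_row P = n" "dim_col P = K" "dim_row A = n" "dim_col A = n" "dim_row Yh = b" "dim_col Yh = b"
    "dim_row Yt = b" "dim_col Yt = b"
    "dim_row Tup = K" "dim_col Tup = b" "dim_row Fb = K" "dim_col Fb = b"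
    "dim_row E1 = b" "dim_col E1 = s" "dim_row B = n" "dim_col B = p" "dim_row g = s" "dim_col g = q"
    "dim_row C = q" "dim_col C = n"
    using P A Yh Yt Tup Fb E1 B g C by auto
  have AV': "A * (P * (Fb * Z)) = P * (Tup * Z)" if "dim_row Z = b" for Z
  proof -
    have "A * (P * (Fb * Z)) = A * (P * Fb) * Z" using that by (simp add: mult_assoc_d)
    also have "\<dots> = P * (Tup * Z)" using AV unfolding Vmp using that by (simp add: mult_assoc_d)
    finally show ?thesis .
  qed
  have AVT: "transpose_mat Fb * (transpose_mat P * transpose_mat A) = transpose_mat Tup * transpose_mat P"
  proof -
    have "transpose_mat (A * (P * Fb)) = transpose_mat (P * Tup)" using AV Vmp by simp
    then show ?thesis by (simp add: transpose_mult_d mult_assoc_d)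
  qed
  have Ceq: "C = transpose_mat g * (transpose_mat E1 * (transpose_mat Fb * transpose_mat P))"
  proof -
    have "C = transpose_mat (transpose_mat C)" by simp
    also have "\<dots> = transpose_mat (P * Fb * E1 * g)" using g Vmp by simp
    finally show ?thesis by (simp add: transpose_mult_d mult_assoc_d)
  qed
  show ?thesis
    unfolding Vmp
    apply (subst (2) Ceq)
    apply (simp add: dsimps AV' AVT g(2) Vmp)
    done
qed


lemma rearrL:
  fixes P1 P2 w1 w2 z1 z2 h1 h2 h3 c :: "real mat"
  assumes e1: "P1 = w1 + z1" and e2: "P2 = w2 + z2" and e3: "(w1 - h1) + (w2 - h2) = - h3 - c"
    and cs: "w1 \<in> carrier_mat r k" "w2 \<in> carrier_mat r k" "z1 \<in> carrier_mat r k" "z2 \<in> carrier_mat r k"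
    "h1 \<in> carrier_mat r k" "h2 \<in> carrier_mat r k" "h3 \<in> carrier_mat r k" "c \<in> carrier_mat r k"
  shows "((P1 - h1) + (P2 - h2)) + h3 + c = z1 + z2"
proof (rule eq_matI)
  fix i j assume ij: "i < dim_row (z1 + z2)" "j < dim_col (z1 + z2)"
  then have ij': "i < r" "j < k" using cs by auto
  have "((w1 - h1) + (w2 - h2)) $$ (i,j) = (- h3 - c) $$ (i,j)" using e3 by simp
  then have "w1 $$ (i,j) - h1 $$ (i,j) + (w2 $$ (i,j) - h2 $$ (i,j)) = - h3 $$ (i,j) - c $$ (i,j)"
    using ij' cs by simp
  then show "(((P1 - h1) + (P2 - h2)) + h3 + c) $$ (i,j) = (z1 + z2) $$ (i,j)"
    unfolding e1 e2 using ij' cs by simp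
qed (use assms in auto)

lemma L_stepB:
  fixes Yh Yt Fb Elp E1 Tup Tm Bm g :: "real mat"
  assumes Fb: "Fb \<in> carrier_mat K b" and Elp: "Elp \<in> carrier_mat K s" and E1: "E1 \<in> carrier_mat b s"
    and split: "Fb * transpose_mat Fb + Elp * transpose_mat Elp = 1\<^sub>m K"
    and Tm: "Tm = transpose_mat Fb * Tup" and Bm: "Bm \<in> carrier_mat b p"
    and g: "g \<in> carrier_mat s q"
    and Yh: "Yh \<in> carrier_mat b b" and Yt: "Yt \<in> carrier_mat b b" and Tup: "Tup \<in> carrier_mat K b"
    and lyap: "(Tm - Yh * Bm * transpose_mat Bm) * Yt + Yt * transpose_mat (Tm - Yh * Bm * transpose_mat Bm)
       = - (Yh * Bm * transpose_mat Bm * Yh) - E1 * g * transpose_mat g * transpose_mat E1"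
  shows "((Tup * Yt * transpose_mat Fb - Fb * Yh * Bm * transpose_mat Bm * Yt * transpose_mat Fb)
          + (Fb * Yt * transpose_mat Tup - Fb * Yt * Bm * transpose_mat Bm * transpose_mat Yh * transpose_mat Fb))
          + Fb * Yh * Bm * transpose_mat Bm * Yh * transpose_mat Fb
          + Fb * E1 * g * transpose_mat g * transpose_mat E1 * transpose_mat Fb
     = Elp * (transpose_mat Elp * Tup * Yt) * transpose_mat Fb + Fb * (Yt * transpose_mat Tup * Elp) * transpose_mat Elp"
proof -
  have [simp]: "dim_row Yh = b" "dim_col Yh = b" "dim_row Yt = b" "dim_col Yt = b"
    "dim_row Tup = K" "dim_col Tup = b" "dim_row Fb = K" "dim_col Fb = b" "dim_row Elp = K" "dim_col Elp = s"
    "dim_row E1 = b" "dim_col E1 = s" "dim_row Bm = b" "dim_col Bm = p" "dim_row g = s" "dim_col g = q"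
    using Yh Yt Tup Fb Elp E1 Bm g by auto
  have L2: "Fb * ((Tm - Yh * Bm * transpose_mat Bm) * Yt + Yt * transpose_mat (Tm - Yh * Bm * transpose_mat Bm)) * transpose_mat Fb
      = Fb * (- (Yh * Bm * transpose_mat Bm * Yh) - E1 * g * transpose_mat g * transpose_mat E1) * transpose_mat Fb"
    by (simp only: lyap)
  have L3: "(Fb * (transpose_mat Fb * (Tup * (Yt * transpose_mat Fb))) - Fb * (Yh * (Bm * (transpose_mat Bm * (Yt * transpose_mat Fb)))))
      + (Fb * (Yt * (transpose_mat Tup * (Fb * transpose_mat Fb))) - Fb * (Yt * (Bm * (transpose_mat Bm * (transpose_mat Yh * transpose_mat Fb)))))
      = - (Fb * (Yh * (Bm * (transpose_mat Bm * (Yh * transpose_mat Fb))))) - Fb * (E1 * (g * (transpose_mat g * (transpose_mat E1 * transpose_mat Fb))))"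
    using L2 unfolding Tm by (simp add: dsimps)
  have S1: "Tup * (Yt * transpose_mat Fb) = Fb * (transpose_mat Fb * (Tup * (Yt * transpose_mat Fb)))
      + Elp * (transpose_mat Elp * (Tup * (Yt * transpose_mat Fb)))"
  proof -
    have "Tup * (Yt * transpose_mat Fb) = 1\<^sub>m K * (Tup * (Yt * transpose_mat Fb))" by simp
    also have "\<dots> = (Fb * transpose_mat Fb + Elp * transpose_mat Elp) * (Tup * (Yt * transpose_mat Fb))"
      by (simp only: split)
    finally show ?thesis by (simp add: dsimps)
  qed
  have S2: "Fb * (Yt * transpose_mat Tup) = Fb * (Yt * (transpose_mat Tup * (Fb * transpose_mat Fb)))
      + Fb * (Yt * (transpose_mat Tup * (Elp * transpose_mat Elp)))"
  proof -
    have "Fb * (Yt * transpose_mat Tup) = (Fb * (Yt * transpose_mat Tup)) * 1\<^sub>m K" by simp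
    also have "\<dots> = (Fb * (Yt * transpose_mat Tup)) * (Fb * transpose_mat Fb + Elp * transpose_mat Elp)"
      by (simp only: split)
    finally show ?thesis by (simp add: dsimps)
  qed
  show ?thesis
    apply (simp add: dsimps)
    apply (rule rearrL[where r=K and k=K, OF S1 S2 L3])
    apply (auto intro!: carrier_matI)
    done
qed


lemma fi_expand2:
  fixes X1 X2 :: "real mat"
  assumes "X1 \<in> carrier_mat r c" "X2 \<in> carrier_mat r c"
  shows "frob_inner (X1 + X2) (X1 + X2) = frob_inner X1 X1 + frob_inner X2 X2 + 2 * frob_inner X1 X2"
  using assms by (simp add: fi_add_left fi_add_right fi_sym[of X2 X1])

lemma L_norms:
  fixes P Fb Elp Tup Yt W :: "real mat"
  assumes P: "P \<in> carrier_mat n K" "transpose_mat P * P = 1\<^sub>m K"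
    and Fb: "Fb \<in> carrier_mat K b" "transpose_mat Fb * Fb = 1\<^sub>m b"
    and Elp: "Elp \<in> carrier_mat K s" "transpose_mat Elp * Elp = 1\<^sub>m s"
    and o1: "transpose_mat Fb * Elp = 0\<^sub>m b s" and o2: "transpose_mat Elp * Fb = 0\<^sub>m s b"
    and Tup: "Tup \<in> carrier_mat K b" and Yt: "Yt \<in> carrier_mat b b" "transpose_mat Yt = Yt"
    and W: "W \<in> carrier_mat b b"
  defines "NL \<equiv> Elp * (transpose_mat Elp * Tup * Yt) * transpose_mat Fb + Fb * (Yt * transpose_mat Tup * Elp) * transpose_mat Elp"
  shows "frob_inner (P * NL * transpose_mat P) (P * NL * transpose_mat P)
           = 2 * frob_inner (Yt * transpose_mat Tup * Elp) (Yt * transpose_mat Tup * Elp)"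
    "frob_inner (P * NL * transpose_mat P) (P * (Fb * W * transpose_mat Fb) * transpose_mat P) = 0"
    "frob_inner (P * (Fb * W * transpose_mat Fb) * transpose_mat P) (P * (Fb * W * transpose_mat Fb) * transpose_mat P)
       = frob_inner W W"
proof -
  let ?t = "transpose_mat Elp * Tup * Yt" and ?u = "Yt * transpose_mat Tup * Elp"
  have t: "?t \<in> carrier_mat s b" using Elp Tup Yt by auto
  have u: "?u \<in> carrier_mat b s" using Elp Tup Yt by auto
  have c2: "Elp * ?t * transpose_mat Fb \<in> carrier_mat K K" using Elp t Fb by auto
  have c3: "Fb * ?u * transpose_mat Elp \<in> carrier_mat K K" using Elp u Fb by auto
  have cw: "Fb * W * transpose_mat Fb \<in> carrier_mat K K" using W Fb by auto
  have NL: "NL \<in> carrier_mat K K" unfolding NL_def using c2 c3 by auto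
  have "frob_inner (P * NL * transpose_mat P) (P * NL * transpose_mat P) = frob_inner NL NL"
    by (rule iso_lr[OF P P NL NL])
  also have "\<dots> = frob_inner ?t ?t + frob_inner ?u ?u"
  proof -
    have d2: "frob_inner (Elp * ?t * transpose_mat Fb) (Elp * ?t * transpose_mat Fb) = frob_inner ?t ?t"
      by (rule iso_lr[OF Elp Fb t t])
    have d3: "frob_inner (Fb * ?u * transpose_mat Elp) (Fb * ?u * transpose_mat Elp) = frob_inner ?u ?u"
      by (rule iso_lr[OF Fb Elp u u])
    have x23: "frob_inner (Elp * ?t * transpose_mat Fb) (Fb * ?u * transpose_mat Elp) = 0"
      by (rule orth_l[OF Elp(1) Fb(1) Fb(1) Elp(1) t u o2])
    have x32: "frob_inner (Fb * ?u * transpose_mat Elp) (Elp * ?t * transpose_mat Fb) = 0"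
      by (rule orth_l[OF Fb(1) Elp(1) Elp(1) Fb(1) u t o1])
    show ?thesis unfolding NL_def using fi_expand2[OF c2 c3] d2 d3 x23 x32 by simp
  qed
  also have "frob_inner ?t ?t = frob_inner ?u ?u"
  proof -
    have "transpose_mat ?t = ?u" using Elp Tup Yt by (simp add: transpose_mult_d mult_assoc_d)
    then show ?thesis using fi_transpose_self[of ?t] by simp
  qed
  finally show "frob_inner (P * NL * transpose_mat P) (P * NL * transpose_mat P)
           = 2 * frob_inner ?u ?u" by simp
  have "frob_inner (P * NL * transpose_mat P) (P * (Fb * W * transpose_mat Fb) * transpose_mat P)
     = frob_inner NL (Fb * W * transpose_mat Fb)"
    by (rule iso_lr[OF P P NL cw])
  also have "\<dots> = 0"
  proof -
    have x1: "frob_inner (Elp * ?t * transpose_mat Fb) (Fb * W * transpose_mat Fb) = 0"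
      by (rule orth_l[OF Elp(1) Fb(1) Fb(1) Fb(1) t W o2])
    have x2: "frob_inner (Fb * ?u * transpose_mat Elp) (Fb * W * transpose_mat Fb) = 0"
      by (rule orth_r[OF Fb(1) Fb(1) Elp(1) Fb(1) u W o2])
    show ?thesis unfolding NL_def using c2 c3 cw x1 x2 Fb Elp by (subst fi_add_left) auto
  qed
  finally show "frob_inner (P * NL * transpose_mat P) (P * (Fb * W * transpose_mat Fb) * transpose_mat P) = 0" .
  have "frob_inner (P * (Fb * W * transpose_mat Fb) * transpose_mat P) (P * (Fb * W * transpose_mat Fb) * transpose_mat P)
     = frob_inner (Fb * W * transpose_mat Fb) (Fb * W * transpose_mat Fb)"
    by (rule iso_lr[OF P P cw cw])
  also have "\<dots> = frob_inner W W" by (rule iso_lr[OF Fb Fb W W])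
  finally show "frob_inner (P * (Fb * W * transpose_mat Fb) * transpose_mat P) (P * (Fb * W * transpose_mat Fb) * transpose_mat P)
       = frob_inner W W" .
qed




lemma Z_struct:
  fixes P Fb Vmp Yt Yh D B :: "real mat"
  assumes P: "P \<in> carrier_mat n K" and Fb: "Fb \<in> carrier_mat K b" and Vmp: "Vmp = P * Fb"
    and B: "B \<in> carrier_mat n p" and Yh: "Yh \<in> carrier_mat b b" and Yt: "Yt \<in> carrier_mat b b"
    and D: "D = Yt - Yh"
  shows "(Vmp * Yt * transpose_mat Vmp - Vmp * Yh * transpose_mat Vmp) * B * transpose_mat B
       * (Vmp * Yt * transpose_mat Vmp - Vmp * Yh * transpose_mat Vmp)
     = P * (Fb * (D * (transpose_mat Vmp * B) * transpose_mat (transpose_mat Vmp * B) * D) * transpose_mat Fb) * transpose_mat P"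
proof -
  have [simp]: "dim_row P = n" "dim_col P = K" "dim_row Yh = b" "dim_col Yh = b"
    "dim_row Yt = b" "dim_col Yt = b" "dim_row Fb = K" "dim_col Fb = b" "dim_row B = n" "dim_col B = p"
    "dim_row D = b" "dim_col D = b"
    using P Yh Yt Fb B D by auto
  have Z: "Vmp * Yt * transpose_mat Vmp - Vmp * Yh * transpose_mat Vmp = P * (Fb * (D * (transpose_mat Fb * transpose_mat P)))"
    unfolding D Vmp by (simp add: mult_assoc_d mult_minus_d minus_mult_d transpose_mult_d)
  show ?thesis unfolding Z unfolding Vmp by (simp add: mult_assoc_d transpose_mult_d)
qed

lemma fi_3x2:
  fixes X1 X2 X3 Y1 Y2 :: "real mat"
  assumes "X1 \<in> carrier_mat r c" "X2 \<in> carrier_mat r c" "X3 \<in> carrier_mat r c"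
    "Y1 \<in> carrier_mat r c" "Y2 \<in> carrier_mat r c"
  shows "frob_inner (X1 + X2 + X3) (Y1 + Y2) = frob_inner X1 Y1 + frob_inner X1 Y2 + frob_inner X2 Y1
     + frob_inner X2 Y2 + frob_inner X3 Y1 + frob_inner X3 Y2"
proof -
  have "frob_inner (X1 + X2 + X3) (Y1 + Y2) = frob_inner (X1 + X2) (Y1 + Y2) + frob_inner X3 (Y1 + Y2)"
    using assms by (intro fi_add_left) auto
  also have "frob_inner (X1 + X2) (Y1 + Y2) = frob_inner X1 (Y1 + Y2) + frob_inner X2 (Y1 + Y2)"
    using assms by (intro fi_add_left) auto
  finally show ?thesis using assms by (simp add: fi_add_right)
qed

lemma fi_3x1:
  fixes X1 X2 X3 Y1 :: "real mat"
  assumes "X1 \<in> carrier_mat r c" "X2 \<in> carrier_mat r c" "X3 \<in> carrier_mat r c"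
    "Y1 \<in> carrier_mat r c"
  shows "frob_inner (X1 + X2 + X3) Y1 = frob_inner X1 Y1 + frob_inner X2 Y1 + frob_inner X3 Y1"
proof -
  have "frob_inner (X1 + X2 + X3) Y1 = frob_inner (X1 + X2) Y1 + frob_inner X3 Y1"
    using assms by (intro fi_add_left) auto
  also have "frob_inner (X1 + X2) Y1 = frob_inner X1 Y1 + frob_inner X2 Y1"
    using assms by (intro fi_add_left) auto
  finally show ?thesis .
qed

lemma gamma_eq:
  fixes P e El R Tu Y Yt W :: "real mat"
  assumes P: "P \<in> carrier_mat n K" "transpose_mat P * P = 1\<^sub>m K"
    and e: "e \<in> carrier_mat K a" "transpose_mat e * e = 1\<^sub>m a"
    and El: "El \<in> carrier_mat K s" "transpose_mat El * El = 1\<^sub>m s"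
    and o1: "transpose_mat e * El = 0\<^sub>m a s" and o2: "transpose_mat El * e = 0\<^sub>m s a"
    and R: "R \<in> carrier_mat a a" and Tu: "Tu \<in> carrier_mat K a" and Y: "Y \<in> carrier_mat a a" "transpose_mat Y = Y"
    and Yt: "Yt \<in> carrier_mat a a" "transpose_mat Yt = Yt" and W: "W \<in> carrier_mat a a"
  defines "M1 \<equiv> e * R * transpose_mat e + El * (transpose_mat El * Tu * Y) * transpose_mat e
            + e * (Y * transpose_mat Tu * El) * transpose_mat El"
    and "NL \<equiv> El * (transpose_mat El * Tu * Yt) * transpose_mat e + e * (Yt * transpose_mat Tu * El) * transpose_mat El"
  shows "frob_inner (P * M1 * transpose_mat P) (P * NL * transpose_mat P)
           = 2 * frob_inner (transpose_mat El * Tu * Y) (transpose_mat El * Tu * Yt)"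
    "frob_inner (P * M1 * transpose_mat P) (P * (e * W * transpose_mat e) * transpose_mat P) = frob_inner R W"
proof -
  let ?t = "transpose_mat El * Tu * Y" and ?u = "Y * transpose_mat Tu * El"
  let ?t' = "transpose_mat El * Tu * Yt" and ?u' = "Yt * transpose_mat Tu * El"
  have t: "?t \<in> carrier_mat s a" "?t' \<in> carrier_mat s a" using El Tu Y Yt by auto
  have u: "?u \<in> carrier_mat a s" "?u' \<in> carrier_mat a s" using El Tu Y Yt by auto
  have c1: "e * R * transpose_mat e \<in> carrier_mat K K" using e R by auto
  have c2: "El * ?t * transpose_mat e \<in> carrier_mat K K" using El t e by auto
  have c3: "e * ?u * transpose_mat El \<in> carrier_mat K K" using El u e by auto
  have c2': "El * ?t' * transpose_mat e \<in> carrier_mat K K" using El t e by auto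
  have c3': "e * ?u' * transpose_mat El \<in> carrier_mat K K" using El u e by auto
  have cw: "e * W * transpose_mat e \<in> carrier_mat K K" using e W by auto
  have M1: "M1 \<in> carrier_mat K K" unfolding M1_def using c1 c2 c3 by auto
  have NL: "NL \<in> carrier_mat K K" unfolding NL_def using c2' c3' by auto
  have "frob_inner (P * M1 * transpose_mat P) (P * NL * transpose_mat P) = frob_inner M1 NL"
    by (rule iso_lr[OF P P M1 NL])
  also have "\<dots> = frob_inner ?t ?t' + frob_inner ?u ?u'"
  proof -
    have a1: "frob_inner (e * R * transpose_mat e) (El * ?t' * transpose_mat e) = 0"
      by (rule orth_l[OF e(1) El(1) e(1) e(1) R t(2) o1])
    have a2: "frob_inner (e * R * transpose_mat e) (e * ?u' * transpose_mat El) = 0"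
      by (rule orth_r[OF e(1) e(1) e(1) El(1) R u(2) o1])
    have b1: "frob_inner (El * ?t * transpose_mat e) (El * ?t' * transpose_mat e) = frob_inner ?t ?t'"
      by (rule iso_lr[OF El e t])
    have b2: "frob_inner (El * ?t * transpose_mat e) (e * ?u' * transpose_mat El) = 0"
      by (rule orth_l[OF El(1) e(1) e(1) El(1) t(1) u(2) o2])
    have d1: "frob_inner (e * ?u * transpose_mat El) (El * ?t' * transpose_mat e) = 0"
      by (rule orth_l[OF e(1) El(1) El(1) e(1) u(1) t(2) o1])
    have d2: "frob_inner (e * ?u * transpose_mat El) (e * ?u' * transpose_mat El) = frob_inner ?u ?u'"
      by (rule iso_lr[OF e El u])
    show ?thesis unfolding M1_def NL_def using fi_3x2[OF c1 c2 c3 c2' c3'] a1 a2 b1 b2 d1 d2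
      by simp
  qed
  also have "frob_inner ?u ?u' = frob_inner ?t ?t'"
  proof -
    have "transpose_mat ?t = ?u" "transpose_mat ?t' = ?u'" using El Tu Y Yt by (simp_all add: transpose_mult_d mult_assoc_d)
    then show ?thesis using fi_transpose[of ?t ?t'] t Y Yt by auto
  qed
  finally show "frob_inner (P * M1 * transpose_mat P) (P * NL * transpose_mat P) = 2 * frob_inner ?t ?t'" by simp
  have "frob_inner (P * M1 * transpose_mat P) (P * (e * W * transpose_mat e) * transpose_mat P)
      = frob_inner M1 (e * W * transpose_mat e)"
    by (rule iso_lr[OF P P M1 cw])
  also have "\<dots> = frob_inner R W"
  proof -
    have a1: "frob_inner (e * R * transpose_mat e) (e * W * transpose_mat e) = frob_inner R W"
      by (rule iso_lr[OF e e R W])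
    have a2: "frob_inner (El * ?t * transpose_mat e) (e * W * transpose_mat e) = 0"
      by (rule orth_l[OF El(1) e(1) e(1) e(1) t(1) W o2])
    have a3: "frob_inner (e * ?u * transpose_mat El) (e * W * transpose_mat e) = 0"
      by (rule orth_r[OF e(1) e(1) El(1) e(1) u(1) W o2])
    show ?thesis unfolding M1_def using fi_3x1[OF c1 c2 c3 cw] a1 a2 a3
      by simp
  qed
  finally show "frob_inner (P * M1 * transpose_mat P) (P * (e * W * transpose_mat e) * transpose_mat P) = frob_inner R W" .
qed


lemma gamma_gt:
  fixes P f Fb h Elp M1 t u W :: "real mat"
  assumes P: "P \<in> carrier_mat n K" "transpose_mat P * P = 1\<^sub>m K"
    and Fb: "Fb \<in> carrier_mat K b" "transpose_mat Fb * Fb = 1\<^sub>m b"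
    and h: "h \<in> carrier_mat b a'" and f: "f = Fb * h"
    and Elp: "Elp \<in> carrier_mat K s" and o: "transpose_mat f * Elp = 0\<^sub>m a' s"
    and M1: "M1 \<in> carrier_mat a' a'" and t: "t \<in> carrier_mat s b" and u: "u \<in> carrier_mat b s"
    and W: "W \<in> carrier_mat b b"
  shows "frob_inner ((P * f) * M1 * transpose_mat (P * f))
            (P * (Elp * t * transpose_mat Fb + Fb * u * transpose_mat Elp) * transpose_mat P) = 0"
    "frob_inner ((P * f) * M1 * transpose_mat (P * f)) (P * (Fb * W * transpose_mat Fb) * transpose_mat P)
       = frob_inner M1 (transpose_mat h * W * h)"
proof -
  have fc: "f \<in> carrier_mat K a'" using f Fb h by auto
  have e1: "(P * f) * M1 * transpose_mat (P * f) = P * (f * M1 * transpose_mat f) * transpose_mat P"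
    using P fc M1 by (simp add: mult_assoc_d transpose_mult_d)
  have cM: "f * M1 * transpose_mat f \<in> carrier_mat K K" using fc M1 by auto
  have c2: "Elp * t * transpose_mat Fb \<in> carrier_mat K K" using Elp t Fb by auto
  have c3: "Fb * u * transpose_mat Elp \<in> carrier_mat K K" using Elp u Fb by auto
  have cw: "Fb * W * transpose_mat Fb \<in> carrier_mat K K" using W Fb by auto
  have "frob_inner ((P * f) * M1 * transpose_mat (P * f))
            (P * (Elp * t * transpose_mat Fb + Fb * u * transpose_mat Elp) * transpose_mat P)
     = frob_inner (f * M1 * transpose_mat f) (Elp * t * transpose_mat Fb + Fb * u * transpose_mat Elp)"
    unfolding e1 using c2 c3 by (intro iso_lr[OF P P cM]) auto
  also have "\<dots> = 0"
  proof -
    have a1: "frob_inner (f * M1 * transpose_mat f) (Elp * t * transpose_mat Fb) = 0"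
      by (rule orth_l[OF fc Elp fc Fb(1) M1 t o])
    have a2: "frob_inner (f * M1 * transpose_mat f) (Fb * u * transpose_mat Elp) = 0"
      by (rule orth_r[OF fc Fb(1) fc Elp M1 u o])
    show ?thesis using a1 a2 cM c2 c3 Elp Fb fc by (subst fi_add_right) auto
  qed
  finally show "frob_inner ((P * f) * M1 * transpose_mat (P * f))
            (P * (Elp * t * transpose_mat Fb + Fb * u * transpose_mat Elp) * transpose_mat P) = 0" .
  have hM: "h * M1 * transpose_mat h \<in> carrier_mat b b" using h M1 by auto
  have e2: "f * M1 * transpose_mat f = Fb * (h * M1 * transpose_mat h) * transpose_mat Fb"
    unfolding f using Fb h M1 by (simp add: mult_assoc_d transpose_mult_d)
  have "frob_inner ((P * f) * M1 * transpose_mat (P * f)) (P * (Fb * W * transpose_mat Fb) * transpose_mat P)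
     = frob_inner (f * M1 * transpose_mat f) (Fb * W * transpose_mat Fb)"
    unfolding e1 by (rule iso_lr[OF P P cM cw])
  also have "\<dots> = frob_inner (h * M1 * transpose_mat h) W"
    unfolding e2 by (rule iso_lr[OF Fb Fb hM W])
  also have "\<dots> = frob_inner (h * (M1 * transpose_mat h)) W"
    using h M1 by (simp add: mult_assoc_d)
  also have "\<dots> = frob_inner (M1 * transpose_mat h) (transpose_mat h * W)"
    using h M1 W by (intro fi_mult_left) auto
  also have "\<dots> = frob_inner M1 (transpose_mat h * W * transpose_mat (transpose_mat h))"
    using h M1 W by (intro fi_mult_right) auto
  also have "transpose_mat h * W * transpose_mat (transpose_mat h) = transpose_mat h * W * h" by simp
  finally show "frob_inner ((P * f) * M1 * transpose_mat (P * f)) (P * (Fb * W * transpose_mat Fb) * transpose_mat P)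
       = frob_inner M1 (transpose_mat h * W * h)" .
qed





theorem proposition2:
  fixes n p q m m' :: nat
    and A Ainv B C g Y Yt :: "real mat"
    and V T Tu Bm :: "nat \<Rightarrow> real mat"
    and X Yh Q Xt Z L D W E1m Em1 Em'1 R N :: "real mat"
  assumes A: "A \<in> carrier_mat n n"
    and Ainv: "Ainv \<in> carrier_mat n n" "A * Ainv = 1\<^sub>m n" "Ainv * A = 1\<^sub>m n"
    and B: "B \<in> carrier_mat n p"
    and C: "C \<in> carrier_mat q n"
    and V_dim: "\<And>j. 1 \<le> j \<Longrightarrow> j \<le> m' + 1 \<Longrightarrow> V j \<in> carrier_mat n (2 * q * j)"
    and V_orth: "\<And>j. 1 \<le> j \<Longrightarrow> j \<le> m' + 1 \<Longrightarrow>
                    transpose_mat (V j) * V j = 1\<^sub>m (2 * q * j)"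
    and V_span: "\<And>j. 1 \<le> j \<Longrightarrow> j \<le> m' + 1 \<Longrightarrow>
                    col_space (V j) = EK A Ainv (transpose_mat C) j"
    and V_nested: "\<And>j i c. 1 \<le> j \<Longrightarrow> j \<le> m' \<Longrightarrow> i < n \<Longrightarrow> c < 2 * q * j \<Longrightarrow>
                    V (Suc j) $$ (i, c) = V j $$ (i, c)"
    and g: "g \<in> carrier_mat (2 * q) q" "transpose_mat C = V 1 * g"
    and m: "1 \<le> m" "m \<le> m'"
    and Y: "Y \<in> carrier_mat (2 * q * m) (2 * q * m)" "transpose_mat Y = Y"
    and Yt: "Yt \<in> carrier_mat (2 * q * m') (2 * q * m')" "transpose_mat Yt = Yt"
  assumes "T = (\<lambda>j. transpose_mat (V j) * A * V j)"
    and "Tu = (\<lambda>j. transpose_mat (V (Suc j)) * A * V j)"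
    and "Bm = (\<lambda>j. transpose_mat (V j) * B)"
    and "X = V m * Y * transpose_mat (V m)"
    and "Yh = pad_diag Y (2 * q * m')"
    and "Q = T m' - Yh * Bm m' * transpose_mat (Bm m')"
  assumes Yt_sol: "Q * Yt + Yt * transpose_mat Q =
      - (Yh * Bm m' * transpose_mat (Bm m') * Yh)
      - Efirst (2 * q * m') (2 * q) * g * transpose_mat g * transpose_mat (Efirst (2 * q * m') (2 * q))"
  assumes "Xt = V m' * Yt * transpose_mat (V m')"
    and "Z = Xt - X"
    and "L = (A - X * B * transpose_mat B) * Xt + Xt * transpose_mat (A - X * B * transpose_mat B)
             + X * B * transpose_mat B * X + transpose_mat C * C"
    and "D = Yt - Yh"
    and "W = D * Bm m' * transpose_mat (Bm m') * D"
    and "E1m = Efirst (2 * q * m) (2 * q)"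
    and "Em1 = Elast (2 * q * (m + 1)) (2 * q)"
    and "Em'1 = Elast (2 * q * (m' + 1)) (2 * q)"
    and "R = T m * Y + Y * transpose_mat (T m) - Y * Bm m * transpose_mat (Bm m) * Y
             + E1m * g * transpose_mat g * transpose_mat E1m"
    and "N = Em1 * transpose_mat Em1 * Tu m * pad_right Y (2 * q)
             + pad_below Y (2 * q) * transpose_mat (Tu m) * Em1 * transpose_mat Em1"
  shows "((frob_norm (riccati A B C X))\<^sup>2
           = (frob_norm R)\<^sup>2 + 2 * (frob_norm (Y * transpose_mat (Tu m) * Em1))\<^sup>2)
    \<and> ((frob_norm L)\<^sup>2 = 2 * (frob_norm (Yt * transpose_mat (Tu m') * Em'1))\<^sup>2)
    \<and> ((frob_norm (Z * B * transpose_mat B * Z))\<^sup>2 = (frob_norm W)\<^sup>2)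
    \<and> (frob_inner L (Z * B * transpose_mat B * Z) = 0)
    \<and> (frob_inner (riccati A B C X) L =
           (if m' = m then 2 * frob_inner (transpose_mat Em1 * Tu m * Y) (transpose_mat Em'1 * Tu m' * Yt)
            else 0))
    \<and> (frob_inner (riccati A B C X) (Z * B * transpose_mat B * Z) =
           (if m' = m then frob_inner R W
            else frob_inner R (lead_sub W (2 * q * m))
                 + frob_inner N (lead_sub W (2 * q * (m + 1)))))"

proof -
  note Tdef = assms(19) and Tudef = assms(20) and Bmdef = assms(21) and Xdef = assms(22)
    and Yhdef = assms(23) and Qdef = assms(24) and Xtdef = assms(26) and Zdef = assms(27)
    and Ldef = assms(28) and Ddef = assms(29) and Wdef = assms(30) and E1mdef = assms(31)
    and Em1def = assms(32) and Em'1def = assms(33) and Rdef = assms(34) and Ndef = assms(35)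
  have nest_entry: "V (j + d) $$ (i, c) = V j $$ (i, c)"
    if "1 \<le> j" "j + d \<le> Suc m'" "i < n" "c < 2 * q * j" for j d i c
    using that
  proof (induction d)
    case 0 then show ?case by simp
  next
    case (Suc d)
    have "c < 2 * q * (j + d)" using Suc.prems by (meson le_add1 less_le_trans mult_le_mono2)
    then have "V (Suc (j + d)) $$ (i, c) = V (j + d) $$ (i, c)"
      using Suc.prems by (intro V_nested) auto
    then show ?case using Suc by simp
  qed
  have nest: "V j = V k * Efirst (2 * q * k) (2 * q * j)" if "1 \<le> j" "j \<le> k" "k \<le> Suc m'" for j k
  proof (rule eq_matI)
    have Vk: "V k \<in> carrier_mat n (2 * q * k)" using V_dim that by auto
    have Vj: "V j \<in> carrier_mat n (2 * q * j)" using V_dim that by auto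
    show "dim_row (V j) = dim_row (V k * Efirst (2 * q * k) (2 * q * j))" using Vk Vj by simp
    show "dim_col (V j) = dim_col (V k * Efirst (2 * q * k) (2 * q * j))" using Vk Vj by simp
    fix i c assume "i < dim_row (V k * Efirst (2 * q * k) (2 * q * j))" "c < dim_col (V k * Efirst (2 * q * k) (2 * q * j))"
    then have ic: "i < n" "c < 2 * q * j" using Vk by auto
    have cjk: "c < 2 * q * k" using ic that by (meson less_le_trans mult_le_mono2)
    have "(V k * Efirst (2 * q * k) (2 * q * j)) $$ (i, c) = V k $$ (i, c)"
      using Vk ic cjk by (simp add: Efirst_def scalar_prod_def atLeast0LessThan sum.delta)
    also have "\<dots> = V j $$ (i, c)" using nest_entry[of j "k - j" i c] that ic by simp
    finally show "V j $$ (i, c) = (V k * Efirst (2 * q * k) (2 * q * j)) $$ (i, c)" by simp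
  qed
  define K where "K = 2 * q * Suc m'"
  define s where "s = 2 * q"
  define b where "b = 2 * q * m'"
  define a where "a = 2 * q * m"
  define a' where "a' = 2 * q * Suc m"
  have Kbs: "K = b + s" unfolding K_def b_def s_def by simp
  have a'as: "a' = a + s" unfolding a'_def a_def s_def by simp
  have sa: "s \<le> a" unfolding s_def a_def using m by simp
  have sb: "s \<le> b" unfolding s_def b_def using m by simp
  have ab: "a \<le> b" unfolding a_def b_def using m by simp
  have a'K: "a' \<le> K" unfolding a'_def K_def using m by simp
  let ?P = "V (Suc m')"
  have P: "?P \<in> carrier_mat n K" "transpose_mat ?P * ?P = 1\<^sub>m K"
    unfolding K_def using V_dim[of "Suc m'"] V_orth[of "Suc m'"] by auto
  let ?U = "V (Suc m)"
  have U: "?U \<in> carrier_mat n a'" "transpose_mat ?U * ?U = 1\<^sub>m a'"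
    unfolding a'_def using V_dim[of "Suc m"] V_orth[of "Suc m"] m by auto
  have Vmc: "V m \<in> carrier_mat n a" unfolding a_def using V_dim[of m] m by auto
  have Vm'c: "V m' \<in> carrier_mat n b" unfolding b_def using V_dim[of m'] m by auto
  have Vm_U: "V m = ?U * Efirst a' a" unfolding a'_def a_def using nest[of m "Suc m"] m by simp
  have V1_U: "V 1 = ?U * (Efirst a' a * Efirst a s)"
  proof -
    have "V 1 = ?U * Efirst a' s" unfolding a'_def s_def using nest[of 1 "Suc m"] m by simp
    also have "Efirst a' s = Efirst a' a * Efirst a s" using Efirst_comp[of s a a'] sa a'as by simp
    finally show ?thesis .
  qed
  have Vm'_P: "V m' = ?P * Efirst K b" unfolding K_def b_def using nest[of m' "Suc m'"] m by simp
  have Vm_m': "V m = V m' * Efirst b a" unfolding b_def a_def using nest[of m m'] m by simp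
  have V1_m': "V 1 = V m' * Efirst b s" unfolding b_def s_def using nest[of 1 m'] m by simp
  have Um_P: "?U = ?P * Efirst K a'" unfolding K_def a'_def using nest[of "Suc m" "Suc m'"] m by simp
  have AVm: "A * V m = ?U * Tu m"
    unfolding Tudef using AV_range[OF A Ainv(1,2) C, of "V m" m ?U] V_dim[of m] V_dim[of "Suc m"] V_orth[of "Suc m"] V_span[of m] V_span[of "Suc m"] m by simp
  have AVm': "A * V m' = ?P * Tu m'"
    unfolding Tudef using AV_range[OF A Ainv(1,2) C, of "V m'" m' ?P] V_dim[of m'] V_dim[of "Suc m'"] V_orth[of "Suc m'"] V_span[of m'] V_span[of "Suc m'"] m by simp
  have Tum: "Tu m \<in> carrier_mat a' a" unfolding Tudef a'_def a_def using V_dim[of m] V_dim[of "Suc m"] A m by auto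
  have Tum': "Tu m' \<in> carrier_mat K b" unfolding Tudef K_def b_def using V_dim[of m'] V_dim[of "Suc m'"] A m by auto
  let ?e = "Efirst a' a" and ?El = "Elast a' s" and ?E1 = "Efirst a s"
  have ec: "?e \<in> carrier_mat a' a" "transpose_mat ?e * ?e = 1\<^sub>m a" using Efirst_TT a'as by auto
  have Elc: "?El \<in> carrier_mat a' s" "transpose_mat ?El * ?El = 1\<^sub>m s" using Elast_TT a'as by auto
  have o1: "transpose_mat ?e * ?El = 0\<^sub>m a s" using EfEl_zero a'as by auto
  have o2: "transpose_mat ?El * ?e = 0\<^sub>m s a" using ElEf_zero a'as by auto
  have spl: "?e * transpose_mat ?e + ?El * transpose_mat ?El = 1\<^sub>m a'" using EfEl_split a'as by auto
  have gc: "g \<in> carrier_mat s q" using g unfolding s_def by simp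
  have Yc: "Y \<in> carrier_mat a a" using Y unfolding a_def by simp
  have Rc: "R \<in> carrier_mat a a" unfolding Rdef Tdef Bmdef E1mdef using Vmc A B Yc gc
    by (auto simp: a_def s_def)
  have Eq1: "E1m = ?E1" unfolding E1mdef a_def s_def ..
  have Eqm1: "Em1 = ?El" unfolding Em1def a'_def s_def by simp
  define M1 where "M1 = ?e * R * transpose_mat ?e + ?El * (transpose_mat ?El * Tu m * Y) * transpose_mat ?e
            + ?e * (Y * transpose_mat (Tu m) * ?El) * transpose_mat ?El"
  have RX: "riccati A B C X = ?U * M1 * transpose_mat ?U"
  proof -
    have "riccati A B C X = ?U * (Tu m * Y * transpose_mat ?e + ?e * Y * transpose_mat (Tu m)
      - ?e * Y * (transpose_mat (V m) * B) * transpose_mat (transpose_mat (V m) * B) * Y * transpose_mat ?e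
      + ?e * ?E1 * g * transpose_mat g * transpose_mat ?E1 * transpose_mat ?e) * transpose_mat ?U"
      unfolding Xdef by (rule alpha_struct[OF U ec(1) Elc(1) _ Vm_U V1_U A B C gc g(2) Yc AVm Tum]) simp
    also have "Tu m * Y * transpose_mat ?e + ?e * Y * transpose_mat (Tu m)
      - ?e * Y * (transpose_mat (V m) * B) * transpose_mat (transpose_mat (V m) * B) * Y * transpose_mat ?e
      + ?e * ?E1 * g * transpose_mat g * transpose_mat ?E1 * transpose_mat ?e = M1"
      unfolding M1_def Rdef Tdef Bmdef Eq1
      by (rule alpha_rearr[OF U ec(1) Elc(1) _ spl Vm_U A B gc Yc AVm Tum]) simp
    finally show ?thesis .
  qed
  have alpha: "(frob_norm (riccati A B C X))\<^sup>2
           = (frob_norm R)\<^sup>2 + 2 * (frob_norm (Y * transpose_mat (Tu m) * Em1))\<^sup>2"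
    unfolding frob_norm_sq RX M1_def Eqm1
    by (rule alpha_norm[OF U ec Elc o1 o2 Rc Tum Yc Y(2)])
  let ?Fb = "Efirst K b" and ?Elp = "Elast K s" and ?E1' = "Efirst b s" and ?eb = "Efirst b a"
  have Fbc: "?Fb \<in> carrier_mat K b" "transpose_mat ?Fb * ?Fb = 1\<^sub>m b" using Efirst_TT Kbs by auto
  have Elpc: "?Elp \<in> carrier_mat K s" "transpose_mat ?Elp * ?Elp = 1\<^sub>m s" using Elast_TT Kbs by auto
  have o1': "transpose_mat ?Fb * ?Elp = 0\<^sub>m b s" using EfEl_zero Kbs by auto
  have o2': "transpose_mat ?Elp * ?Fb = 0\<^sub>m s b" using ElEf_zero Kbs by auto
  have spl': "?Fb * transpose_mat ?Fb + ?Elp * transpose_mat ?Elp = 1\<^sub>m K" using EfEl_split Kbs by auto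
  have Yhc: "Yh \<in> carrier_mat b b" unfolding Yhdef b_def by (simp add: pad_diag_def)
  have Yhe: "Yh = ?eb * Y * transpose_mat ?eb" unfolding Yhdef using pad_diag_E[OF Yc ab] b_def by simp
  have Ytc: "Yt \<in> carrier_mat b b" using Yt unfolding b_def by simp
  have Bmc: "Bm m' \<in> carrier_mat b p" unfolding Bmdef using Vm'c B by auto
  have Xeq: "X = V m' * Yh * transpose_mat (V m')"
    unfolding Xdef Vm_m' Yhe using Vm'c Yc by (simp add: mult_assoc_d transpose_mult_d)
  have Cg': "transpose_mat C = V m' * ?E1' * g" using g(2) V1_m' by simp
  have PP: "transpose_mat ?P * (?P * Tu m') = Tu m'"
  proof -
    have "transpose_mat ?P * (?P * Tu m') = (transpose_mat ?P * ?P) * Tu m'"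
      using P Tum' by (intro assoc_mult_mat[symmetric]) auto
    then show ?thesis using P Tum' by simp
  qed
  have Tm': "T m' = transpose_mat ?Fb * Tu m'"
    unfolding Tdef Vm'_P using P Fbc Tum' A
    by (simp add: mult_assoc_d transpose_mult_d AVm'[unfolded Vm'_P] PP)
  define NL where "NL = ?Elp * (transpose_mat ?Elp * Tu m' * Yt) * transpose_mat ?Fb
      + ?Fb * (Yt * transpose_mat (Tu m') * ?Elp) * transpose_mat ?Elp"
  have LP: "L = ?P * NL * transpose_mat ?P"
  proof -
    have "L = ?P * (((Tu m' * Yt * transpose_mat ?Fb - ?Fb * Yh * (transpose_mat (V m') * B) * transpose_mat (transpose_mat (V m') * B) * Yt * transpose_mat ?Fb)
          + (?Fb * Yt * transpose_mat (Tu m') - ?Fb * Yt * (transpose_mat (V m') * B) * transpose_mat (transpose_mat (V m') * B) * transpose_mat Yh * transpose_mat ?Fb))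
          + ?Fb * Yh * (transpose_mat (V m') * B) * transpose_mat (transpose_mat (V m') * B) * Yh * transpose_mat ?Fb
          + ?Fb * ?E1' * g * transpose_mat g * transpose_mat ?E1' * transpose_mat ?Fb) * transpose_mat ?P"
      unfolding Ldef Xeq Xtdef
      by (rule L_stepA[OF P(1) Fbc(1) _ Vm'_P A B C gc Cg' Yhc Ytc AVm' Tum']) auto
    also have "(((Tu m' * Yt * transpose_mat ?Fb - ?Fb * Yh * (transpose_mat (V m') * B) * transpose_mat (transpose_mat (V m') * B) * Yt * transpose_mat ?Fb)
          + (?Fb * Yt * transpose_mat (Tu m') - ?Fb * Yt * (transpose_mat (V m') * B) * transpose_mat (transpose_mat (V m') * B) * transpose_mat Yh * transpose_mat ?Fb))
          + ?Fb * Yh * (transpose_mat (V m') * B) * transpose_mat (transpose_mat (V m') * B) * Yh * transpose_mat ?Fb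
          + ?Fb * ?E1' * g * transpose_mat g * transpose_mat ?E1' * transpose_mat ?Fb) = NL"
      unfolding NL_def Bmdef[symmetric, THEN fun_cong, of m', simplified]
    proof (rule L_stepB[OF Fbc(1) Elpc(1) _ spl' Tm' Bmc gc Yhc Ytc Tum'])
      show "Efirst b s \<in> carrier_mat b s" using sb by simp
      show "(T m' - Yh * Bm m' * transpose_mat (Bm m')) * Yt + Yt * transpose_mat (T m' - Yh * Bm m' * transpose_mat (Bm m'))
          = - (Yh * Bm m' * transpose_mat (Bm m') * Yh) - ?E1' * g * transpose_mat g * transpose_mat ?E1'"
        using Yt_sol unfolding Qdef b_def s_def .
    qed
    finally show ?thesis .
  qed
  have Wc: "W \<in> carrier_mat b b" unfolding Wdef Ddef using Ytc Yhc Bmc by auto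
  have ZB: "Z * B * transpose_mat B * Z = ?P * (?Fb * W * transpose_mat ?Fb) * transpose_mat ?P"
    unfolding Zdef Xtdef Xeq Wdef Bmdef
    by (rule Z_struct[OF P(1) Fbc(1) Vm'_P B Yhc Ytc Ddef])
  have Ytc2: "transpose_mat Yt = Yt" using Yt by simp
  have Eqm'1: "Em'1 = ?Elp" unfolding Em'1def K_def s_def by simp
  note LN = L_norms[OF P Fbc Elpc o1' o2' Tum' Ytc Ytc2 Wc]
  have beta: "(frob_norm L)\<^sup>2 = 2 * (frob_norm (Yt * transpose_mat (Tu m') * Em'1))\<^sup>2"
    unfolding frob_norm_sq LP NL_def Eqm'1 by (rule LN(1))
  have zeta: "frob_inner L (Z * B * transpose_mat B * Z) = 0"
    unfolding LP NL_def ZB by (rule LN(2))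
  have delta: "(frob_norm (Z * B * transpose_mat B * Z))\<^sup>2 = (frob_norm W)\<^sup>2"
    unfolding frob_norm_sq ZB by (rule LN(3))
  have M1c: "M1 \<in> carrier_mat a' a'" unfolding M1_def using ec Elc Rc Tum Yc by auto
  have gam_eps: "frob_inner (riccati A B C X) L =
           (if m' = m then 2 * frob_inner (transpose_mat Em1 * Tu m * Y) (transpose_mat Em'1 * Tu m' * Yt)
            else 0)
    \<and> frob_inner (riccati A B C X) (Z * B * transpose_mat B * Z) =
           (if m' = m then frob_inner R W
            else frob_inner R (lead_sub W (2 * q * m))
                 + frob_inner N (lead_sub W (2 * q * (m + 1))))"
  proof (cases "m' = m")
    case True
    have e1: "a = b" "a' = K" unfolding a_def b_def a'_def K_def True by simp_all
    have e2: "?U = ?P" "Tu m = Tu m'" using True by simp_all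
    have RX2: "riccati A B C X = ?P * (?Fb * R * transpose_mat ?Fb + ?Elp * (transpose_mat ?Elp * Tu m' * Y) * transpose_mat ?Fb
            + ?Fb * (Y * transpose_mat (Tu m') * ?Elp) * transpose_mat ?Elp) * transpose_mat ?P"
      using RX unfolding M1_def e1 e2 .
    have Rc': "R \<in> carrier_mat b b" and Yc': "Y \<in> carrier_mat b b" using Rc Yc e1 by auto
    note GE = gamma_eq[OF P Fbc Elpc o1' o2' Rc' Tum' Yc' Y(2) Ytc Ytc2 Wc]
    have "frob_inner (riccati A B C X) L = 2 * frob_inner (transpose_mat Em1 * Tu m * Y) (transpose_mat Em'1 * Tu m' * Yt)"
      unfolding RX2 LP NL_def Eqm1 Eqm'1 e1 e2 by (rule GE(1))
    moreover have "frob_inner (riccati A B C X) (Z * B * transpose_mat B * Z) = frob_inner R W"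
      unfolding RX2 ZB by (rule GE(2))
    ultimately show ?thesis using True by simp
  next
    case False
    then have mm: "Suc m \<le> m'" using m by simp
    have a'b: "a' \<le> b" unfolding a'_def b_def using mm by (intro mult_le_mono2)
    let ?f = "Efirst K a'" and ?h = "Efirst b a'"
    have hc: "?h \<in> carrier_mat b a'" by simp
    have fh: "?f = ?Fb * ?h" using Efirst_comp[OF a'b] Kbs by simp
    have of: "transpose_mat ?f * ?Elp = 0\<^sub>m a' s" using EfEl_zero a'b Kbs by simp
    have tc: "transpose_mat ?Elp * Tu m' * Yt \<in> carrier_mat s b" using Elpc Tum' Ytc by auto
    have uc: "Yt * transpose_mat (Tu m') * ?Elp \<in> carrier_mat b s" using Elpc Tum' Ytc by auto
    note GG = gamma_gt[OF P Fbc(1,2) hc fh Elpc(1) of M1c tc uc Wc]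
    have g1: "frob_inner (riccati A B C X) L = 0"
      unfolding RX Um_P LP NL_def by (rule GG(1))
    have lw: "transpose_mat ?h * W * ?h = lead_sub W a'" using lead_sub_E[OF Wc a'b] by simp
    have g2: "frob_inner (riccati A B C X) (Z * B * transpose_mat B * Z) = frob_inner M1 (lead_sub W a')"
      unfolding RX Um_P ZB lw[symmetric] by (rule GG(2))
    have Lwc: "lead_sub W a' \<in> carrier_mat a' a'" by (simp add: lead_sub_def)
    have p1c: "?El * (transpose_mat ?El * Tu m * Y) * transpose_mat ?e \<in> carrier_mat a' a'" using Elc ec Tum Yc by auto
    have p2c: "?e * (Y * transpose_mat (Tu m) * ?El) * transpose_mat ?El \<in> carrier_mat a' a'" using Elc ec Tum Yc by auto
    have p0c: "?e * R * transpose_mat ?e \<in> carrier_mat a' a'" using ec Rc by auto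
    have Neq: "N = ?El * (transpose_mat ?El * Tu m * Y) * transpose_mat ?e + ?e * (Y * transpose_mat (Tu m) * ?El) * transpose_mat ?El"
    proof -
      have pr: "pad_right Y (2 * q) = Y * transpose_mat ?e" using pad_right_E[of Y a "2*q"] Yc a'as s_def by simp
      have pb: "pad_below Y (2 * q) = ?e * Y" using pad_below_E[of Y a "2*q"] Yc a'as s_def by simp
      show ?thesis unfolding Ndef Eqm1 pr pb using Elc ec Tum Yc
        by (simp add: mult_assoc_d transpose_mult_d)
    qed
    have fi1: "frob_inner M1 (lead_sub W a') = frob_inner (?e * R * transpose_mat ?e) (lead_sub W a') + frob_inner N (lead_sub W a')"
      unfolding M1_def Neq using fi_3x1[OF p0c p1c p2c Lwc] fi_add_left[of _ "lead_sub W a'"] p1c p2c Lwc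
      by simp
    have fi2: "frob_inner (?e * R * transpose_mat ?e) (lead_sub W a') = frob_inner R (lead_sub W a)"
    proof -
      have "frob_inner (?e * R * transpose_mat ?e) (lead_sub W a') = frob_inner (?e * (R * transpose_mat ?e)) (lead_sub W a')"
        using ec Rc by (simp add: mult_assoc_d)
      also have "\<dots> = frob_inner (R * transpose_mat ?e) (transpose_mat ?e * lead_sub W a')"
        using ec Rc Lwc by (intro fi_mult_left) auto
      also have "\<dots> = frob_inner R (transpose_mat ?e * lead_sub W a' * transpose_mat (transpose_mat ?e))"
        using ec Rc Lwc by (intro fi_mult_right) auto
      also have "transpose_mat ?e * lead_sub W a' * transpose_mat (transpose_mat ?e) = lead_sub W a"
      proof -
        have he: "?h * ?e = Efirst b a" using Efirst_comp[of a a' b] a'as a'b by simp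
        have "transpose_mat ?e * lead_sub W a' * transpose_mat (transpose_mat ?e)
            = transpose_mat (?h * ?e) * W * (?h * ?e)"
          unfolding lw[symmetric] using Wc by (simp add: mult_assoc_d transpose_mult_d)
        also have "\<dots> = lead_sub W a" unfolding he using lead_sub_E[OF Wc ab] by simp
        finally show ?thesis .
      qed
      finally show ?thesis .
    qed
    have "frob_inner (riccati A B C X) (Z * B * transpose_mat B * Z) =
        frob_inner R (lead_sub W (2 * q * m)) + frob_inner N (lead_sub W (2 * q * (m + 1)))"
      using g2 fi1 fi2 unfolding a_def a'_def by simp
    then show ?thesis using g1 False by simp
  qed
  show ?thesis using alpha beta delta zeta gam_eps by simp
qed

end
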